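(* For every $\varepsilon>0$ and every $f\in C_\lambda(I)$ there exist $\delta<\varepsilon/2$ and $F\in C_\lambda(I)$ such that: (1) $F$ is piecewise affine and $\rho(f,F)<\varepsilon/2$; (2) if $g\in C_\lambda(I)$ and $\rho(F,g)<\delta$, then every $\delta$-pseudo orbit $\mathbf{x}=(x_i)_{i\ge0}$ of $g$ is $\varepsilon$-traced by some point $z\in I$ (i.e. $|g^i(z)-x_i|<\varepsilon$ for all $i\ge0$); moreover, if $\mathbf{x}$ is a periodic sequence, then $z$ can be chosen to be a periodic point of $g$.
   Context: $I=[0,1]$, $\lambda$ Lebesgue measure; $C_\lambda(I)$ is the set of continuous $\lambda$-preserving maps $I\to I$, with uniform metric $\rho(f,g)=\sup_x|f(x)-g(x)|$. Piecewise affine means: affine on each interval of monotonicity, with only finitely many points having no neighborhood on which the map has constant slope. A $\delta$-pseudo orbit of $g$ is a sequence $(x_i)_{i\ge0}$ with $|g(x_i)-x_{i+1}|<\delta$ for all $i$; it is periodic if $x_{i+N}=x_i$ for some $N\ge1$ and all $i$. *)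

theory Defs
  imports "HOL-Analysis.Analysis"
begin

definition I01 :: "real set" where "I01 = {0..1}"

definition C_lambda :: "(real \<Rightarrow> real) set" where
  "C_lambda = {f. continuous_on I01 f \<and> f ` I01 \<subseteq> I01 \<and>
      (\<forall>A \<in> sets borel. A \<subseteq> I01 \<longrightarrow>
         emeasure lborel {x \<in> I01. f x \<in> A} = emeasure lborel A)}"

definition rho :: "(real \<Rightarrow> real) \<Rightarrow> (real \<Rightarrow> real) \<Rightarrow> real" where
  "rho f g = (SUP x \<in> I01. \<bar>f x - g x\<bar>)"

definition piecewise_affine :: "(real \<Rightarrow> real) \<Rightarrow> bool" where
  "piecewise_affine f \<longleftrightarrow> (\<exists>S. finite S \<and>
     (\<forall>x \<in> I01 - S. \<exists>e>0. \<exists>a b. \<forall>y \<in> I01. \<bar>y - x\<bar> < e \<longrightarrow> f y = a * y + b))"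

definition pseudo_orbit :: "(real \<Rightarrow> real) \<Rightarrow> real \<Rightarrow> (nat \<Rightarrow> real) \<Rightarrow> bool" where
  "pseudo_orbit g \<delta> xs \<longleftrightarrow> (\<forall>i. xs i \<in> I01) \<and> (\<forall>i. \<bar>g (xs i) - xs (Suc i)\<bar> < \<delta>)"

definition periodic_seq :: "(nat \<Rightarrow> real) \<Rightarrow> bool" where
  "periodic_seq xs \<longleftrightarrow> (\<exists>N\<ge>1. \<forall>i. xs (i + N) = xs i)"

definition traces :: "(real \<Rightarrow> real) \<Rightarrow> real \<Rightarrow> real \<Rightarrow> (nat \<Rightarrow> real) \<Rightarrow> bool" where
  "traces g \<epsilon> z xs \<longleftrightarrow> (\<forall>i. \<bar>(g ^^ i) z - xs i\<bar> < \<epsilon>)"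

definition periodic_point :: "(real \<Rightarrow> real) \<Rightarrow> real \<Rightarrow> bool" where
  "periodic_point g z \<longleftrightarrow> (\<exists>n\<ge>1. (g ^^ n) z = z)"

end

theory Submission
  imports Defs "HOL-Analysis.Analysis"
begin


lemma emeasure_affine_pre:
  fixes c t :: real
  assumes "c \<noteq> 0" and S: "S \<in> sets borel"
  shows "emeasure lborel S = ennreal \<bar>c\<bar> * emeasure lborel {x. t + c * x \<in> S}"
proof -
  have "emeasure lborel S = emeasure (density (distr lborel borel (\<lambda>x. t + c * x)) (\<lambda>_. ennreal \<bar>c\<bar>)) S"
    using lborel_real_affine[OF assms(1), of t] by simp
  also have "\<dots> = (\<integral>\<^sup>+x\<in>S. ennreal \<bar>c\<bar> \<partial>(distr lborel borel (\<lambda>x. t + c * x)))"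
    using S by (simp add: emeasure_density)
  also have "\<dots> = ennreal \<bar>c\<bar> * emeasure (distr lborel borel (\<lambda>x. t + c * x)) S"
    using S by (simp add: nn_integral_cmult_indicator)
  also have "\<dots> = ennreal \<bar>c\<bar> * emeasure lborel {x. t + c * x \<in> S}"
    using S by (simp add: emeasure_distr vimage_def)
  finally show ?thesis .
qed


fun cells :: "nat list \<Rightarrow> nat list" where
  "cells (v#w#vs) = min v w # cells (w#vs)" | "cells _ = []"

fun adj :: "nat list \<Rightarrow> bool" where
  "adj (v#w#vs) = ((w = Suc v \<or> v = Suc w) \<and> adj (w#vs))" | "adj _ = True"

fun plv :: "real \<Rightarrow> (nat \<Rightarrow> real) \<Rightarrow> real \<Rightarrow> nat list \<Rightarrow> real \<Rightarrow> real" where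
  "plv h L x (v#w#vs) t = (if t \<le> x + L (min v w)
      then real v * h + (real w * h - real v * h) * (t - x) / L (min v w)
      else plv h L (x + L (min v w)) (w#vs) t)"
| "plv h L x [v] t = real v * h"
| "plv h L x [] t = 0"

fun knots :: "(nat \<Rightarrow> real) \<Rightarrow> real \<Rightarrow> nat list \<Rightarrow> real set" where
  "knots L x (v#w#vs) = insert x (knots L (x + L (min v w)) (w#vs))"
| "knots L x _ = {x}"

definition endx :: "(nat \<Rightarrow> real) \<Rightarrow> real \<Rightarrow> nat list \<Rightarrow> real" where
  "endx L x vs = x + sum_list (map L (cells vs))"

lemma endx_simps[simp]:
  "endx L x (v#w#vs) = endx L (x + L (min v w)) (w#vs)"
  "endx L x [v] = x" "endx L x [] = x"
  by (simp_all add: endx_def)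

definition Lpos :: "(nat \<Rightarrow> real) \<Rightarrow> nat list \<Rightarrow> bool" where
  "Lpos L vs \<longleftrightarrow> (\<forall>j \<in> set (cells vs). L j > 0)"

lemma Lpos_simps[simp]:
  "Lpos L (v#w#vs) \<longleftrightarrow> L (min v w) > 0 \<and> Lpos L (w#vs)"
  "Lpos L [v]" "Lpos L []"
  by (auto simp: Lpos_def)

lemma endx_ge: "Lpos L vs \<Longrightarrow> x \<le> endx L x vs"
proof (induction L x vs rule: knots.induct)
  case (1 L x v w vs)
  then have "x + L (min v w) \<le> endx L (x + L (min v w)) (w#vs)" "L (min v w) > 0" by auto
  then show ?case by simp
qed simp_all

lemma plv_start: "Lpos L vs \<Longrightarrow> plv h L x vs x = (if vs = [] then 0 else real (hd vs) * h)"
  by (cases "(h, L, x, vs, x)" rule: plv.cases) auto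

lemma endx_gt: "Lpos L (v#w#vs) \<Longrightarrow> x < endx L x (v#w#vs)"
  using endx_ge[of L "w#vs" "x + L (min v w)"] by simp

lemma plv_end: "Lpos L vs \<Longrightarrow> vs \<noteq> [] \<Longrightarrow> plv h L x vs (endx L x vs) = real (last vs) * h"
proof (induction L x vs rule: knots.induct)
  case (1 L x v w vs)
  show ?case
  proof (cases vs)
    case Nil
    then show ?thesis using 1 by simp
  next
    case (Cons u us)
    have "x + L (min v w) < endx L (x + L (min v w)) (w#u#us)"
      using 1 Cons by (intro endx_gt) simp
    then show ?thesis using 1 Cons by simp
  qed
qed simp_all

lemma plv_cont: "Lpos L vs \<Longrightarrow> continuous_on {x..endx L x vs} (plv h L x vs)"
proof (induction L x vs rule: knots.induct)
  case (1 L x v w vs)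
  define m where "m = x + L (min v w)"
  have c1: "continuous_on {x..m} (plv h L x (v#w#vs))"
  proof (rule continuous_on_eq[where f = "\<lambda>t. real v * h + (real w * h - real v * h) * (t - x) / L (min v w)"])
    show "continuous_on {x..m} (\<lambda>t. real v * h + (real w * h - real v * h) * (t - x) / L (min v w))"
      using 1 by (intro continuous_intros) auto
  qed (auto simp: m_def)
  have c2: "continuous_on {m..endx L x (v#w#vs)} (plv h L x (v#w#vs))"
  proof (rule continuous_on_eq[where f = "plv h L m (w#vs)"])
    show "continuous_on {m..endx L x (v#w#vs)} (plv h L m (w # vs))"
      using 1 by (simp add: m_def)
    fix t assume "t \<in> {m..endx L x (v#w#vs)}"
    then show "plv h L m (w # vs) t = plv h L x (v # w # vs) t"
      using 1 by (cases "t = m") (auto simp: m_def plv_start)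
  qed
  have "{x..endx L x (v#w#vs)} = {x..m} \<union> {m..endx L x (v#w#vs)}"
    using 1 endx_ge[of L "w#vs" m] by (auto simp: m_def)
  then show ?case using continuous_on_closed_Un[OF _ _ c1 c2] by simp
qed auto

lemma between_lin:
  fixes a b \<theta> :: real
  assumes "0 \<le> \<theta>" "\<theta> \<le> 1"
  shows "min a b \<le> a + (b - a) * \<theta> \<and> a + (b - a) * \<theta> \<le> max a b"
proof -
  have "a + (b - a) * \<theta> = (1 - \<theta>) * a + \<theta> * b" by (simp add: algebra_simps)
  moreover have "(1 - \<theta>) * min a b + \<theta> * min a b \<le> (1 - \<theta>) * a + \<theta> * b"
    using assms by (intro add_mono mult_left_mono) auto
  moreover have "(1 - \<theta>) * a + \<theta> * b \<le> (1 - \<theta>) * max a b + \<theta> * max a b"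
    using assms by (intro add_mono mult_left_mono) auto
  ultimately show ?thesis by (simp add: algebra_simps)
qed

lemma plv_range:
  assumes "Lpos L vs" "vs \<noteq> []" "h \<ge> 0" "t \<in> {x..endx L x vs}"
  shows "real (Min (set vs)) * h \<le> plv h L x vs t \<and> plv h L x vs t \<le> real (Max (set vs)) * h"
  using assms
proof (induction L x vs rule: knots.induct)
  case (1 L x v w vs)
  define m where "m = x + L (min v w)"
  show ?case
  proof (cases "t \<le> m")
    case True
    define \<theta> where "\<theta> = (t - x) / L (min v w)"
    have th: "0 \<le> \<theta>" "\<theta> \<le> 1" using 1 True by (auto simp: \<theta>_def m_def)
    have eq: "plv h L x (v#w#vs) t = real v * h + (real w * h - real v * h) * \<theta>"
      using True by (simp add: m_def \<theta>_def)
    have "Min (set (v#w#vs)) \<le> v" "Min (set (v#w#vs)) \<le> w" "v \<le> Max (set (v#w#vs))" "w \<le> Max (set (v#w#vs))"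
      by (simp_all only: Min_le Max_ge finite_set list.set_intros)
    hence "Min (set (v#w#vs)) \<le> min v w" "max v w \<le> Max (set (v#w#vs))" by auto
    hence "real (Min (set (v#w#vs))) * h \<le> min (real v * h) (real w * h)"
          "max (real v * h) (real w * h) \<le> real (Max (set (v#w#vs))) * h"
      using 1(4) by (auto intro: mult_right_mono)
    then show ?thesis using between_lin[OF th, of "real v * h" "real w * h"] eq by linarith
  next
    case False
    have "t \<in> {m..endx L m (w#vs)}" using 1 False by (simp add: m_def)
    hence ih: "real (Min (set (w#vs))) * h \<le> plv h L m (w#vs) t \<and> plv h L m (w#vs) t \<le> real (Max (set (w#vs))) * h"
      using 1 by (simp add: m_def)
    have "Min (set (v#w#vs)) \<le> Min (set (w#vs))" "Max (set (w#vs)) \<le> Max (set (v#w#vs))" by auto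
    hence "real (Min (set (v#w#vs))) * h \<le> real (Min (set (w#vs))) * h"
          "real (Max (set (w#vs))) * h \<le> real (Max (set (v#w#vs))) * h"
      using 1(4) by (auto intro: mult_right_mono)
    then show ?thesis using ih False by (simp add: m_def)
  qed
qed auto

lemma plv_attain:
  assumes "Lpos L vs" "u \<in> set vs"
  shows "\<exists>t\<in>{x..endx L x vs}. plv h L x vs t = real u * h"
  using assms
proof (induction L x vs rule: knots.induct)
  case (1 L x v w vs)
  define m where "m = x + L (min v w)"
  show ?case
  proof (cases "u = v")
    case True
    then show ?thesis using 1 endx_ge[of L "v#w#vs" x] by (intro bexI[of _ x]) (auto simp: plv_start)
  next
    case False
    then obtain t where t: "t \<in> {m..endx L m (w#vs)}" "plv h L m (w#vs) t = real u * h"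
      using 1 by (auto simp: m_def)
    have "plv h L x (v#w#vs) t = real u * h"
      using t 1 by (cases "t = m") (auto simp: m_def plv_start)
    moreover have "x \<le> m" using 1 by (simp add: m_def)
    ultimately show ?thesis using t by (intro bexI[of _ t]) (auto simp: m_def)
  qed
qed auto

lemma knots_props: "Lpos L vs \<Longrightarrow> finite (knots L x vs) \<and> x \<in> knots L x vs \<and> endx L x vs \<in> knots L x vs
   \<and> knots L x vs \<subseteq> {x..endx L x vs}"
proof (induction L x vs rule: knots.induct)
  case (1 L x v w vs)
  then show ?case using endx_ge[of L "v#w#vs" x] by auto
qed auto

lemma plv_affine:
  assumes "Lpos L vs" "t \<in> {x<..<endx L x vs} - knots L x vs"
  shows "\<exists>e>0. \<exists>a b. \<forall>s. \<bar>s - t\<bar> < e \<longrightarrow> x < s \<and> s < endx L x vs \<and> plv h L x vs s = a * s + b"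
  using assms
proof (induction L x vs rule: knots.induct)
  case (1 L x v w vs)
  define m where "m = x + L (min v w)"
  show ?case
  proof (cases "t < m")
    case True
    define e where "e = min (t - x) (m - t)"
    have "e > 0" using True 1 by (auto simp: e_def)
    moreover have "\<forall>s. \<bar>s - t\<bar> < e \<longrightarrow> x < s \<and> s < endx L x (v#w#vs) \<and>
      plv h L x (v#w#vs) s = ((real w * h - real v * h) / L (min v w)) * s +
         (real v * h - (real w * h - real v * h) * x / L (min v w))"
    proof (intro allI impI)
      fix s assume "\<bar>s - t\<bar> < e"
      hence s: "x < s" "s < m" by (auto simp: e_def)
      then have "s < endx L x (v#w#vs)" using endx_ge[of L "w#vs" m] 1 by (simp add: m_def)
      then show "x < s \<and> s < endx L x (v#w#vs) \<and> plv h L x (v#w#vs) s = ((real w * h - real v * h) / L (min v w)) * s +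
         (real v * h - (real w * h - real v * h) * x / L (min v w))"
        using s by (simp add: m_def field_simps)
    qed
    ultimately show ?thesis by blast
  next
    case False
    have "m \<in> knots L m (w#vs)" using knots_props[of L "w#vs" m] 1 by simp
    moreover have "t \<notin> knots L m (w#vs)" using 1 by (simp add: m_def)
    ultimately have "t \<noteq> m" by blast
    hence "t > m" using False by simp
    hence "t \<in> {m<..<endx L m (w#vs)} - knots L m (w#vs)" using 1 by (auto simp: m_def)
    then obtain e a b where e: "e > 0" "\<forall>s. \<bar>s - t\<bar> < e \<longrightarrow> m < s \<and> s < endx L m (w#vs) \<and> plv h L m (w#vs) s = a * s + b"
      using 1 by (auto simp: m_def)
    have "x < m" using 1 by (simp add: m_def)
    then show ?thesis using e by (intro exI[of _ e] conjI exI[of _ a] exI[of _ b] allI impI) (auto simp: m_def)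
  qed
qed auto


lemma hq: "(h::real) > 0 \<Longrightarrow> (0 \<le> h * q \<and> h * q \<le> h) \<longleftrightarrow> (0 \<le> q \<and> q \<le> 1)"
  by (simp add: zero_le_mult_iff mult_le_cancel_left1)

lemma seg_measure:
  fixes h L x :: real and v w :: nat
  assumes L: "L > 0" and h: "h > 0" and vw: "w = Suc v \<or> v = Suc w" and A: "A \<in> sets borel"
  shows "{s \<in> {x..x+L}. real v * h + (real w * h - real v * h) * (s - x) / L \<in> A} \<in> sets borel \<and>
    emeasure lborel {s \<in> {x..x+L}. real v * h + (real w * h - real v * h) * (s - x) / L \<in> A}
     = ennreal (L / h) * emeasure lborel (A \<inter> {real (min v w) * h .. real (min v w + 1) * h})"
proof -
  define c where "c = (real w * h - real v * h) / L"
  define t0 where "t0 = real v * h - c * x"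
  define J where "J = {real (min v w) * h .. real (min v w + 1) * h}"
  have phi: "real v * h + (real w * h - real v * h) * (s - x) / L = t0 + c * s" for s
    using L by (simp add: c_def t0_def field_simps)
  have "real w * h - real v * h = h \<or> real w * h - real v * h = - h"
    using vw by (auto simp: algebra_simps)
  hence absc: "\<bar>c\<bar> = h / L" using h L unfolding c_def by auto
  have c0: "c \<noteq> 0" using absc h L by auto
  have inJ: "t0 + c * s \<in> J \<longleftrightarrow> s \<in> {x..x+L}" for s
  proof -
    have "t0 + c * s = real v * h + (real w * h - real v * h) * ((s - x) / L)"
      using phi[of s] by simp
    show ?thesis
    proof (cases "w = Suc v")
      case True
      hence e: "t0 + c * s = real v * h + h * ((s - x) / L)" using phi[of s] by (simp add: algebra_simps)
      have "t0 + c * s \<in> J \<longleftrightarrow> 0 \<le> h * ((s - x) / L) \<and> h * ((s - x) / L) \<le> h"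
        using True by (simp add: J_def e algebra_simps)
      also have "\<dots> \<longleftrightarrow> 0 \<le> (s - x) / L \<and> (s - x) / L \<le> 1"
        by (rule hq[OF h])
      also have "\<dots> \<longleftrightarrow> s \<in> {x..x+L}" using L by (simp add: field_simps)
      finally show ?thesis .
    next
      case False
      hence v: "v = Suc w" using vw by simp
      hence d: "real w * h - real v * h = - h" by (simp add: algebra_simps)
      have e: "t0 + c * s = real v * h - h * ((s - x) / L)" using phi[of s] unfolding d by simp
      have "t0 + c * s \<in> J \<longleftrightarrow> 0 \<le> h * ((s - x) / L) \<and> h * ((s - x) / L) \<le> h"
        using v by (auto simp: J_def e algebra_simps)
      also have "\<dots> \<longleftrightarrow> 0 \<le> (s - x) / L \<and> (s - x) / L \<le> 1"
        by (rule hq[OF h])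
      also have "\<dots> \<longleftrightarrow> s \<in> {x..x+L}" using L by (simp add: field_simps)
      finally show ?thesis .
    qed
  qed
  have seteq: "{s \<in> {x..x+L}. real v * h + (real w * h - real v * h) * (s - x) / L \<in> A} = {s. t0 + c * s \<in> A \<inter> J}"
    using inJ phi by auto
  have AJ: "A \<inter> J \<in> sets borel" using A by (auto simp: J_def)
  have meas: "{s. t0 + c * s \<in> A \<inter> J} \<in> sets borel"
  proof -
    have "(\<lambda>s. t0 + c * s) \<in> borel_measurable borel" by measurable
    from measurable_sets[OF this AJ] show ?thesis by (simp add: vimage_def)
  qed
  have "emeasure lborel (A \<inter> J) = ennreal (h / L) * emeasure lborel {s. t0 + c * s \<in> A \<inter> J}"
    using emeasure_affine_pre[OF c0 AJ, of t0] absc by simp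
  hence "ennreal (L / h) * emeasure lborel (A \<inter> J) = ennreal (L / h) * ennreal (h / L) * emeasure lborel {s. t0 + c * s \<in> A \<inter> J}"
    by (simp add: mult.assoc)
  also have "ennreal (L / h) * ennreal (h / L) = 1"
    using L h by (simp add: ennreal_mult'[symmetric])
  finally show ?thesis using seteq meas by (simp add: J_def)
qed

lemma single_null[simp]: "emeasure lborel {t::real. t = x \<and> P} = 0"
  by (cases P) auto

lemma plv_measure:
  assumes "Lpos L vs" "adj vs" "h > 0" "A \<in> sets borel"
  shows "{t \<in> {x..endx L x vs}. plv h L x vs t \<in> A} \<in> sets borel \<and>
    emeasure lborel {t \<in> {x..endx L x vs}. plv h L x vs t \<in> A} =
    sum_list (map (\<lambda>j. ennreal (L j / h) * emeasure lborel (A \<inter> {real j * h .. real (j + 1) * h})) (cells vs))"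
  using assms
proof (induction L x vs rule: knots.induct)
  case (1 L x v w vs)
  define m where "m = x + L (min v w)"
  define S1 where "S1 = {s \<in> {x..m}. real v * h + (real w * h - real v * h) * (s - x) / L (min v w) \<in> A}"
  define S2 where "S2 = {t \<in> {m..endx L m (w#vs)}. plv h L m (w#vs) t \<in> A}"
  have s1: "S1 \<in> sets borel \<and> emeasure lborel S1 = ennreal (L (min v w) / h) * emeasure lborel (A \<inter> {real (min v w) * h .. real (min v w + 1) * h})"
    unfolding S1_def m_def using seg_measure[of "L (min v w)" h w v A x] 1 by auto
  have s2: "S2 \<in> sets borel \<and> emeasure lborel S2 = sum_list (map (\<lambda>j. ennreal (L j / h) * emeasure lborel (A \<inter> {real j * h .. real (j + 1) * h})) (cells (w#vs)))"
    unfolding S2_def m_def using 1 by auto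
  have S2m: "S2 - {m} \<in> sets borel" using s2 by auto
  have e2: "emeasure lborel (S2 - {m}) = emeasure lborel S2"
    using s2 by (intro emeasure_Diff_null_set) (auto intro: finite_imp_null_set_lborel)
  have xm: "x \<le> m" using 1 by (simp add: m_def)
  have me: "m \<le> endx L m (w#vs)" using 1 by (intro endx_ge) simp
  have seteq: "{t \<in> {x..endx L x (v#w#vs)}. plv h L x (v#w#vs) t \<in> A} = S1 \<union> (S2 - {m})"
    using xm me by (auto simp: S1_def S2_def m_def)
  have disj: "S1 \<inter> (S2 - {m}) = {}" by (auto simp: S1_def S2_def)
  have "emeasure lborel (S1 \<union> (S2 - {m})) = emeasure lborel S1 + emeasure lborel (S2 - {m})"
    using s1 S2m disj by (intro plus_emeasure[symmetric]) auto
  moreover have "S1 \<union> (S2 - {m}) \<in> sets borel" using s1 S2m by auto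
  ultimately show ?case using seteq s1 s2 S2m e2 by (simp add: m_def)
qed (auto simp: emeasure_Diff_null_set finite_imp_null_set_lborel)

lemma cells_set: "adj vs \<Longrightarrow> vs \<noteq> [] \<Longrightarrow> set (cells vs) = {Min (set vs) ..< Max (set vs)}"
proof (induction vs rule: cells.induct)
  case (1 v w vs)
  define a where "a = Min (set (w#vs))"
  define b where "b = Max (set (w#vs))"
  have ih: "set (cells (w#vs)) = {a ..< b}" using 1 by (simp add: a_def b_def)
  have mn: "a \<le> w" "w \<le> b" by (simp_all add: a_def b_def)
  have mm: "Min (set (v#w#vs)) = min v a" "Max (set (v#w#vs)) = max v b"
    by (simp_all add: a_def b_def)
  have sc: "set (cells (v#w#vs)) = insert (min v w) {a..<b}" using ih by simp
  have vw: "v = Suc w \<or> w = Suc v" using 1(2) by auto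
  show ?case
  proof (cases "v = Suc w")
    case True
    show ?thesis
    proof (cases "w < b")
      case True
      then show ?thesis unfolding sc mm using \<open>v = Suc w\<close> mn by (auto simp: min_def max_def)
    next
      case False
      then show ?thesis unfolding sc mm using \<open>v = Suc w\<close> mn by (auto simp: min_def max_def)
    qed
  next
    case False
    hence w: "w = Suc v" using vw by simp
    show ?thesis
    proof (cases "a < w")
      case True
      then show ?thesis unfolding sc mm using w mn by (auto simp: min_def max_def)
    next
      case False
      then show ?thesis unfolding sc mm using w mn by (auto simp: min_def max_def)
    qed
  qed
qed auto


function walk :: "nat \<Rightarrow> nat \<Rightarrow> nat list" where
  "walk a b = (if a = b then [a] else if a < b then a # walk (Suc a) b else a # walk (a - 1) b)"
  by auto
termination by (relation "Wellfounded.measure (\<lambda>(a,b). if a \<le> b then b - a else a - b)") auto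

declare walk.simps[simp del]

lemma walk_props: "walk a b \<noteq> [] \<and> hd (walk a b) = a \<and> last (walk a b) = b \<and> adj (walk a b)
  \<and> set (walk a b) = {min a b..max a b}"
proof (induction a b rule: walk.induct)
  case (1 a b)
  show ?case
  proof (cases "a = b")
    case True
    then show ?thesis by (simp add: walk.simps)
  next
    case False
    show ?thesis
    proof (cases "a < b")
      case True
      hence ih: "walk (Suc a) b \<noteq> [] \<and> hd (walk (Suc a) b) = Suc a \<and> last (walk (Suc a) b) = b \<and> adj (walk (Suc a) b)
         \<and> set (walk (Suc a) b) = {min (Suc a) b..max (Suc a) b}" using 1 False by simp
      then obtain r where r: "walk (Suc a) b = Suc a # r" by (cases "walk (Suc a) b") auto
      have w: "walk a b = a # walk (Suc a) b" using False True by (subst walk.simps) simp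
      have "set (walk a b) = {min a b..max a b}" using ih True unfolding w by auto
      then show ?thesis using ih unfolding w by (simp add: r)
    next
      case F2: False
      hence ih: "walk (a - 1) b \<noteq> [] \<and> hd (walk (a - 1) b) = a - 1 \<and> last (walk (a - 1) b) = b \<and> adj (walk (a - 1) b)
         \<and> set (walk (a - 1) b) = {min (a - 1) b..max (a - 1) b}" using 1 False by simp
      then obtain r where r: "walk (a - 1) b = (a - 1) # r" by (cases "walk (a - 1) b") auto
      have w: "walk a b = a # walk (a - 1) b" using False F2 by (subst walk.simps) simp
      have a: "0 < a" using False F2 by simp
      have "set (walk a b) = {min a b..max a b}" using ih False F2 unfolding w by auto
      moreover have "adj (a # walk (a - 1) b)" using ih a unfolding r by simp
      ultimately show ?thesis using ih unfolding w by (simp add: r)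
    qed
  qed
qed

lemma adj_append_tl:
  assumes "adj xs" "adj ys" "xs \<noteq> []" "ys \<noteq> []" "last xs = hd ys"
  shows "adj (xs @ tl ys)"
  using assms
proof (induction xs)
  case (Cons v vs)
  show ?case
  proof (cases vs)
    case Nil
    then show ?thesis using Cons by (cases ys) auto
  next
    case Cons2: (Cons u us)
    have "adj (vs @ tl ys)" using Cons Cons2 by simp
    moreover have "(u = Suc v \<or> v = Suc u)" using Cons.prems Cons2 by simp
    ultimately show ?thesis using Cons2 by simp
  qed
qed simp

lemma cat_props:
  assumes "xs \<noteq> []" "ys \<noteq> []" "last xs = hd ys"
  shows "xs @ tl ys \<noteq> [] \<and> hd (xs @ tl ys) = hd xs \<and> last (xs @ tl ys) = last ys \<and> set (xs @ tl ys) = set xs \<union> set ys"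
proof -
  obtain y r where y: "ys = y # r" using assms by (cases ys) auto
  have "set ys = insert (last xs) (set r)" using assms y by simp
  moreover have "last xs \<in> set xs" using assms(1) by (rule last_in_set)
  ultimately show ?thesis using assms y by (cases r) auto
qed

definition path3 :: "nat \<Rightarrow> nat \<Rightarrow> nat \<Rightarrow> nat \<Rightarrow> nat list" where
  "path3 c P Q c' = (walk c P @ tl (walk P (Suc Q))) @ tl (walk (Suc Q) c')"

lemma path3_props:
  assumes "P < c" "c \<le> Q" "P < c'" "c' \<le> Q"
  shows "path3 c P Q c' \<noteq> [] \<and> hd (path3 c P Q c') = c \<and> last (path3 c P Q c') = c' \<and> adj (path3 c P Q c')
   \<and> set (path3 c P Q c') = {P..Suc Q}"
proof -
  have w1: "walk c P \<noteq> [] \<and> hd (walk c P) = c \<and> last (walk c P) = P \<and> adj (walk c P) \<and> set (walk c P) = {P..c}"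
    using walk_props[of c P] assms by auto
  have w2: "walk P (Suc Q) \<noteq> [] \<and> hd (walk P (Suc Q)) = P \<and> last (walk P (Suc Q)) = Suc Q \<and> adj (walk P (Suc Q)) \<and> set (walk P (Suc Q)) = {P..Suc Q}"
    using walk_props[of P "Suc Q"] assms by auto
  have w3: "walk (Suc Q) c' \<noteq> [] \<and> hd (walk (Suc Q) c') = Suc Q \<and> last (walk (Suc Q) c') = c' \<and> adj (walk (Suc Q) c') \<and> set (walk (Suc Q) c') = {c'..Suc Q}"
    using walk_props[of "Suc Q" c'] assms by auto
  have a12: "adj (walk c P @ tl (walk P (Suc Q)))"
    by (rule adj_append_tl) (use w1 w2 in simp_all)
  have c12: "walk c P @ tl (walk P (Suc Q)) \<noteq> [] \<and> hd (walk c P @ tl (walk P (Suc Q))) = c \<and> last (walk c P @ tl (walk P (Suc Q))) = Suc Q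
     \<and> set (walk c P @ tl (walk P (Suc Q))) = {P..c} \<union> {P..Suc Q}"
  proof -
    have e: "last (walk c P) = hd (walk P (Suc Q))" using w1 w2 by simp
    have n: "walk c P \<noteq> []" "walk P (Suc Q) \<noteq> []" using w1 w2 by simp_all
    show ?thesis using cat_props[OF n e] w1 w2 by simp
  qed
  have a: "adj (path3 c P Q c')" unfolding path3_def
    by (rule adj_append_tl[OF a12]) (use c12 w3 in simp_all)
  have c: "path3 c P Q c' \<noteq> [] \<and> hd (path3 c P Q c') = c \<and> last (path3 c P Q c') = c'
     \<and> set (path3 c P Q c') = ({P..c} \<union> {P..Suc Q}) \<union> {c'..Suc Q}"
  proof -
    have e: "last (walk c P @ tl (walk P (Suc Q))) = hd (walk (Suc Q) c')" using c12 w3 by simp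
    have n: "walk c P @ tl (walk P (Suc Q)) \<noteq> []" "walk (Suc Q) c' \<noteq> []" using c12 w3 by simp_all
    show ?thesis unfolding path3_def using cat_props[OF n e] c12 w3 by simp
  qed
  have "({P..c} \<union> {P..Suc Q}) \<union> {c'..Suc Q} = {P..Suc Q}" using assms by auto
  then show ?thesis using a c by simp
qed


lemma I01_borel[simp]: "I01 \<in> sets borel" by (simp add: I01_def)

lemma cont_meas:
  assumes "continuous_on I01 f" "S \<in> sets borel"
  shows "{x \<in> I01. f x \<in> S} \<in> sets borel"
proof -
  define fc where "fc x = f (max 0 (min 1 x))" for x :: real
  have "continuous_on UNIV (\<lambda>x::real. max 0 (min 1 x))" by (intro continuous_intros)
  moreover have "(\<lambda>x::real. max 0 (min 1 x)) ` UNIV \<subseteq> I01" by (auto simp: I01_def)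
  ultimately have "continuous_on UNIV fc"
    unfolding fc_def using continuous_on_compose2[OF assms(1)] by blast
  hence "fc \<in> borel_measurable borel" by (rule borel_measurable_continuous_onI)
  hence "fc -` S \<inter> space borel \<in> sets borel" using assms(2) by (rule measurable_sets)
  moreover have "{x \<in> I01. f x \<in> S} = I01 \<inter> (fc -` S \<inter> space borel)"
    by (auto simp: fc_def I01_def)
  ultimately show ?thesis by auto
qed

definition nd :: "nat \<Rightarrow> nat \<Rightarrow> bool" where "nd i j \<longleftrightarrow> i \<le> j + 2 \<and> j \<le> i + 2"

locale cstr =
  fixes f :: "real \<Rightarrow> real" and n :: nat
  assumes fC: "f \<in> C_lambda" and n2: "n \<ge> 2"
begin

definition "h = 1 / real n"
definition H :: "nat \<Rightarrow> real set" where
  "H j = (if j = n - 1 then {real j * h .. 1} else {real j * h ..< real (Suc j) * h})"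
definition J :: "nat \<Rightarrow> real set" where "J j = {real j * h .. real (Suc j) * h}"
definition cidx :: "real \<Rightarrow> nat" where "cidx x = min (n - 1) (nat \<lfloor>x * real n\<rfloor>)"

lemma h_pos: "h > 0" using n2 by (simp add: h_def)
lemma nh: "real n * h = 1" using n2 by (simp add: h_def)
lemma fcont: "continuous_on I01 f" using fC by (simp add: C_lambda_def)
lemma fI: "x \<in> I01 \<Longrightarrow> f x \<in> I01" using fC by (auto simp: C_lambda_def)
lemma fpres: "A \<in> sets borel \<Longrightarrow> A \<subseteq> I01 \<Longrightarrow> emeasure lborel {x \<in> I01. f x \<in> A} = emeasure lborel A"
  using fC by (auto simp: C_lambda_def)

lemma n1h: "real (n - 1) * h = 1 - h"
  using n2 nh by (simp add: of_nat_diff algebra_simps)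

lemma H_sub_J: "H j \<subseteq> J j"
proof (cases "j = n - 1")
  case True
  hence "Suc j = n" using n2 by simp
  hence "real (Suc j) * h = 1" using nh by simp
  then show ?thesis using True by (auto simp: H_def J_def)
qed (auto simp: H_def J_def)

lemma le_h: "a * h \<le> x \<longleftrightarrow> a \<le> x * real n" using n2 by (simp add: h_def field_simps)
lemma lt_h: "x < a * h \<longleftrightarrow> x * real n < a" using n2 by (simp add: h_def field_simps)
lemma le_h2: "x \<le> a * h \<longleftrightarrow> x * real n \<le> a" using n2 by (simp add: h_def field_simps)

lemma cidx_lt: "cidx x < n" using n2 by (simp add: cidx_def)

lemma H_cidx:
  assumes "j < n"
  shows "x \<in> H j \<longleftrightarrow> x \<in> I01 \<and> cidx x = j"
proof (cases "j = n - 1")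
  case True
  have "x \<in> H j \<longleftrightarrow> real (n - 1) \<le> x * real n \<and> x \<le> 1"
    using True by (simp add: H_def le_h)
  also have "\<dots> \<longleftrightarrow> x \<in> I01 \<and> cidx x = j"
  proof
    assume a: "real (n - 1) \<le> x * real n \<and> x \<le> 1"
    hence "0 \<le> x * real n" by (meson of_nat_0_le_iff order_trans)
    hence "x \<ge> 0" using n2 by (simp add: zero_le_mult_iff)
    moreover have "nat \<lfloor>x * real n\<rfloor> \<ge> n - 1" using a by (simp add: le_nat_floor)
    ultimately show "x \<in> I01 \<and> cidx x = j" using a True by (auto simp: I01_def cidx_def)
  next
    assume a: "x \<in> I01 \<and> cidx x = j"
    hence "nat \<lfloor>x * real n\<rfloor> \<ge> n - 1" using True n2 by (auto simp: cidx_def min_def split: if_splits)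
    moreover have "0 \<le> x * real n" using a by (simp add: I01_def)
    ultimately have "real (n - 1) \<le> x * real n"
      using of_nat_floor[of "x * real n"] by (meson of_nat_le_iff order_trans)
    then show "real (n - 1) \<le> x * real n \<and> x \<le> 1" using a by (auto simp: I01_def)
  qed
  finally show ?thesis .
next
  case False
  hence jn: "Suc j \<le> n - 1" using assms by simp
  have "x \<in> H j \<longleftrightarrow> real j \<le> x * real n \<and> x * real n < real (Suc j)"
    using False by (simp add: H_def le_h lt_h)
  also have "\<dots> \<longleftrightarrow> \<lfloor>x * real n\<rfloor> = int j" by (simp add: floor_eq_iff add.commute)
  also have "\<dots> \<longleftrightarrow> x \<in> I01 \<and> cidx x = j"
  proof
    assume a: "\<lfloor>x * real n\<rfloor> = int j"
    hence b: "real j \<le> x * real n \<and> x * real n < real (Suc j)" by (simp add: floor_eq_iff)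
    hence "0 \<le> x * real n" by (meson of_nat_0_le_iff order_trans)
    hence "x \<ge> 0" using n2 by (simp add: zero_le_mult_iff)
    moreover have "real (Suc j) \<le> real n" using jn by simp
    hence "x * real n \<le> real n" using b by linarith
    hence "x \<le> 1" using n2 by (simp add: mult_le_cancel_right2)
    ultimately show "x \<in> I01 \<and> cidx x = j" using a jn by (auto simp: I01_def cidx_def)
  next
    assume a: "x \<in> I01 \<and> cidx x = j"
    hence "x \<ge> 0" by (simp add: I01_def)
    hence "\<lfloor>x * real n\<rfloor> \<ge> 0" by simp
    moreover have "nat \<lfloor>x * real n\<rfloor> = j" using a jn by (auto simp: cidx_def min_def split: if_splits)
    ultimately show "\<lfloor>x * real n\<rfloor> = int j" by (metis nat_0_le)
  qed
  finally show ?thesis .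
qed

lemma H_I: "j < n \<Longrightarrow> H j \<subseteq> I01"
proof
  fix x assume "j < n" "x \<in> H j"
  then show "x \<in> I01" using H_cidx[of j x] by simp
qed
lemma in_H_cidx: "x \<in> I01 \<Longrightarrow> x \<in> H (cidx x)"
  using H_cidx[OF cidx_lt, of x x] by simp
lemma H_disj: "j < n \<Longrightarrow> k < n \<Longrightarrow> j \<noteq> k \<Longrightarrow> H j \<inter> H k = {}"
proof (rule equals0I)
  fix x assume "j < n" "k < n" "j \<noteq> k" "x \<in> H j \<inter> H k"
  then show False using H_cidx[of j x] H_cidx[of k x] by simp
qed
lemma H_meas[simp]: "H j \<in> sets borel" by (simp add: H_def)
lemma I_Union: "I01 = (\<Union>j<n. H j)"
proof
  show "I01 \<subseteq> (\<Union>j<n. H j)" using in_H_cidx cidx_lt by blast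
  show "(\<Union>j<n. H j) \<subseteq> I01" using H_I by blast
qed
lemma H_dfam: "disjoint_family_on H {..<n}" using H_disj by (auto simp: disjoint_family_on_def)

lemma H_emeas: "j < n \<Longrightarrow> emeasure lborel (H j) = ennreal h"
proof (cases "j = n - 1")
  case True
  hence "1 - real j * h = h" using n1h by simp
  then show ?thesis using True h_pos by (simp add: H_def)
next
  case False
  then show ?thesis using h_pos by (simp add: H_def algebra_simps)
qed

lemma H_measure: "j < n \<Longrightarrow> measure lborel (H j) = h"
  using H_emeas h_pos by (simp add: measure_def)

lemma J_I: "j < n \<Longrightarrow> J j \<subseteq> I01"
proof -
  assume "j < n"
  hence "real (Suc j) \<le> real n" by simp
  hence "real (Suc j) * h \<le> 1" using nh h_pos by (metis mult_right_mono less_imp_le)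
  moreover have "0 \<le> real j * h" using h_pos by simp
  ultimately show ?thesis by (auto simp: J_def I01_def)
qed

lemma J_minus_H: "j < n \<Longrightarrow> J j - H j \<subseteq> {real (Suc j) * h}"
proof (cases "j = n - 1")
  case True
  hence "Suc j = n" using n2 by simp
  hence "real (Suc j) * h = 1" using nh by simp
  then show ?thesis using True by (auto simp: H_def J_def)
qed (auto simp: H_def J_def)

lemma J_meas[simp]: "J j \<in> sets borel" by (simp add: J_def)

end


context cstr begin

definition A :: "nat \<Rightarrow> nat \<Rightarrow> real" where
  "A k j = real n * measure lborel {x \<in> H k. f x \<in> H j}"

lemma HS_meas: "k < n \<Longrightarrow> S \<in> sets borel \<Longrightarrow> {x \<in> H k. f x \<in> S} \<in> sets borel"
proof -
  assume k: "k < n" and S: "S \<in> sets borel"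
  have "{x \<in> H k. f x \<in> S} = H k \<inter> {x \<in> I01. f x \<in> S}" using H_I[OF k] by auto
  then show ?thesis using cont_meas[OF fcont S] by auto
qed

lemma HS_fin: "k < n \<Longrightarrow> S \<in> sets borel \<Longrightarrow> emeasure lborel {x \<in> H k. f x \<in> S} \<noteq> \<infinity>"
proof -
  assume k: "k < n" and S: "S \<in> sets borel"
  have "emeasure lborel {x \<in> H k. f x \<in> S} \<le> emeasure lborel (H k)"
    by (intro emeasure_mono) auto
  then show ?thesis using H_emeas[OF k] by (auto simp: top_unique)
qed

lemma A_nonneg: "A k j \<ge> 0" by (simp add: A_def)

lemma A_row: "k < n \<Longrightarrow> (\<Sum>j<n. A k j) = 1"
proof -
  assume k: "k < n"
  have U: "(\<Union>j<n. {x \<in> H k. f x \<in> H j}) = H k"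
  proof
    show "(\<Union>j<n. {x \<in> H k. f x \<in> H j}) \<subseteq> H k" by auto
    show "H k \<subseteq> (\<Union>j<n. {x \<in> H k. f x \<in> H j})"
    proof
      fix x assume x: "x \<in> H k"
      hence "f x \<in> I01" using H_I[OF k] fI by auto
      then show "x \<in> (\<Union>j<n. {x \<in> H k. f x \<in> H j})" using x I_Union by auto
    qed
  qed
  have "measure lborel (\<Union>j<n. {x \<in> H k. f x \<in> H j}) = (\<Sum>j<n. measure lborel {x \<in> H k. f x \<in> H j})"
  proof (rule measure_finite_Union)
    show "disjoint_family_on (\<lambda>j. {x \<in> H k. f x \<in> H j}) {..<n}"
      using H_disj by (auto simp: disjoint_family_on_def)
  qed (use HS_meas[OF k] HS_fin[OF k] in auto)
  hence "(\<Sum>j<n. measure lborel {x \<in> H k. f x \<in> H j}) = h" using U H_measure[OF k] by simp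
  then show ?thesis unfolding A_def by (simp add: sum_distrib_left[symmetric] nh)
qed

lemma A_col: "j < n \<Longrightarrow> (\<Sum>k<n. A k j) = 1"
proof -
  assume j: "j < n"
  have U: "(\<Union>k<n. {x \<in> H k. f x \<in> H j}) = {x \<in> I01. f x \<in> H j}"
    using I_Union by auto
  have "measure lborel (\<Union>k<n. {x \<in> H k. f x \<in> H j}) = (\<Sum>k<n. measure lborel {x \<in> H k. f x \<in> H j})"
  proof (rule measure_finite_Union)
    show "disjoint_family_on (\<lambda>k. {x \<in> H k. f x \<in> H j}) {..<n}"
      using H_disj by (auto simp: disjoint_family_on_def)
  qed (use HS_meas HS_fin in auto)
  moreover have "emeasure lborel {x \<in> I01. f x \<in> H j} = ennreal h"
    using fpres[of "H j"] H_I[OF j] H_emeas[OF j] by simp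
  hence "measure lborel {x \<in> I01. f x \<in> H j} = h"
    using h_pos by (intro measure_eq_emeasure_eq_ennreal) auto
  ultimately have "(\<Sum>k<n. measure lborel {x \<in> H k. f x \<in> H j}) = h" using U by simp
  then show ?thesis unfolding A_def by (simp add: sum_distrib_left[symmetric] nh)
qed

lemma Awit: "k < n \<Longrightarrow> A k j > 0 \<Longrightarrow> \<exists>x\<in>H k. f x \<in> H j"
proof (rule ccontr)
  assume "A k j > 0" "\<not> (\<exists>x\<in>H k. f x \<in> H j)"
  hence e: "{x \<in> H k. f x \<in> H j} = {}" by blast
  have "A k j = 0" unfolding A_def by (simp only: e) simp
  then show False using \<open>A k j > 0\<close> by simp
qed

lemma Hk_interval: "k < n \<Longrightarrow> {real k * h ..< real (Suc k) * h} \<subseteq> H k"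
  using nh by (auto simp: H_def)

lemma Apos:
  assumes k: "k < n" and y: "y \<in> J k" and V: "open V" and fy: "f y \<in> V"
  shows "\<exists>j<n. A k j > 0 \<and> H j \<inter> V \<noteq> {}"
proof (rule ccontr)
  assume con: "\<not> (\<exists>j<n. A k j > 0 \<and> H j \<inter> V \<noteq> {})"
  obtain e where e: "e > 0" "ball (f y) e \<subseteq> V" using V fy open_contains_ball by blast
  have yI: "y \<in> I01" using y J_I[OF k] by auto
  obtain \<eta> where eta: "\<eta> > 0" "\<forall>x'\<in>I01. dist x' y < \<eta> \<longrightarrow> dist (f x') (f y) < e"
    using fcont yI e(1) unfolding continuous_on_iff by blast
  define U where "U = {x. max (real k * h) (y - \<eta>) < x \<and> x < min (real (Suc k) * h) (y + \<eta>)}"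
  have lo: "max (real k * h) (y - \<eta>) < min (real (Suc k) * h) (y + \<eta>)"
    using y eta(1) h_pos by (auto simp: J_def algebra_simps)
  have UH: "U \<subseteq> H k" using Hk_interval[OF k] by (auto simp: U_def)
  have Usub: "U \<subseteq> (\<Union>j<n. {x \<in> H k. f x \<in> H j \<inter> V})"
  proof
    fix x assume x: "x \<in> U"
    hence xH: "x \<in> H k" using UH by auto
    hence xI: "x \<in> I01" using H_I[OF k] by auto
    have "dist x y < \<eta>" using x by (auto simp: U_def dist_real_def)
    hence "f x \<in> V" using eta(2) xI e(2) by (auto simp: dist_commute)
    moreover have "f x \<in> (\<Union>j<n. H j)" using fI[OF xI] I_Union by auto
    ultimately show "x \<in> (\<Union>j<n. {x \<in> H k. f x \<in> H j \<inter> V})" using xH by auto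
  qed
  have null: "{x \<in> H k. f x \<in> H j \<inter> V} \<in> null_sets lborel" if j: "j < n" for j
  proof (cases "A k j > 0")
    case True
    then have "H j \<inter> V = {}" using con j by auto
    then show ?thesis by simp
  next
    case False
    hence "A k j = 0" using A_nonneg[of k j] by simp
    hence "measure lborel {x \<in> H k. f x \<in> H j} = 0" using n2 by (simp add: A_def)
    hence "emeasure lborel {x \<in> H k. f x \<in> H j} = 0"
      using HS_fin[OF k, of "H j"] by (simp add: emeasure_eq_ennreal_measure)
    moreover have "{x \<in> H k. f x \<in> H j \<inter> V} \<subseteq> {x \<in> H k. f x \<in> H j}" by auto
    moreover have "H j \<inter> V \<in> sets borel" using V by auto
    hence "{x \<in> H k. f x \<in> H j \<inter> V} \<in> sets borel"
      using HS_meas[OF k, of "H j \<inter> V"] by blast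
    ultimately show ?thesis
      using HS_meas[OF k, of "H j"] null_sets_subset[of "{x \<in> H k. f x \<in> H j}" lborel "{x \<in> H k. f x \<in> H j \<inter> V}"]
      by (simp add: null_setsI)
  qed
  have "(\<Union>j<n. {x \<in> H k. f x \<in> H j \<inter> V}) \<in> null_sets lborel"
    by (rule null_sets_UN') (use null in auto)
  hence "emeasure lborel U = 0"
    using Usub by (metis (no_types, lifting) U_def emeasure_eq_0 measurable_lborel1 null_setsD1 null_setsD2 pred_intros_logic(1) borel_open open_Collect_less continuous_on_const continuous_on_id open_Collect_conj)
  moreover have "emeasure lborel U > 0"
  proof -
    have "U = {max (real k * h) (y - \<eta>) <..< min (real (Suc k) * h) (y + \<eta>)}" by (auto simp: U_def)
    then show ?thesis using lo by simp
  qed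
  ultimately show False by simp
qed

end


context cstr begin

lemma Aint:
  assumes k: "k < n" and j: "j1 < j" "j < j2" "j2 < n" and A1: "A k j1 > 0" and A2: "A k j2 > 0"
  shows "A k j > 0"
proof -
  obtain x1 where x1: "x1 \<in> H k" "f x1 \<in> H j1" using Awit[OF k A1] by blast
  obtain x2 where x2: "x2 \<in> H k" "f x2 \<in> H j2" using Awit[OF k A2] by blast
  have j1n: "j1 \<noteq> n - 1" using j by simp
  have "f x1 < real (Suc j1) * h" using x1(2) j1n by (simp add: H_def)
  also have "\<dots> \<le> real j * h" using j h_pos by (intro mult_right_mono) auto
  finally have f1: "f x1 < real j * h + h / 2" using h_pos by simp
  have "real (Suc j) * h \<le> real j2 * h" using j h_pos by (intro mult_right_mono) auto
  also have "\<dots> \<le> f x2" using x2(2) by (auto simp: H_def split: if_splits)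
  finally have f2: "real j * h + h / 2 < f x2" using h_pos by (simp add: algebra_simps)
  have x12: "x1 \<in> J k" "x2 \<in> J k" using x1 x2 H_sub_J by auto
  have JI: "J k \<subseteq> I01" using J_I[OF k] .
  have "\<exists>y\<in>J k. f y = real j * h + h / 2"
  proof (cases "x1 \<le> x2")
    case True
    have sub: "{x1..x2} \<subseteq> J k" using x12 by (auto simp: J_def)
    have "continuous_on {x1..x2} f" using fcont sub JI continuous_on_subset by blast
    then obtain y where "x1 \<le> y" "y \<le> x2" "f y = real j * h + h / 2"
      using IVT'[of f x1 "real j * h + h / 2" x2] f1 f2 True by auto
    then show ?thesis using sub by auto
  next
    case False
    have sub: "{x2..x1} \<subseteq> J k" using x12 by (auto simp: J_def)
    have "continuous_on {x2..x1} f" using fcont sub JI continuous_on_subset by blast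
    then obtain y where "x2 \<le> y" "y \<le> x1" "f y = real j * h + h / 2"
      using IVT2'[of f x1 "real j * h + h / 2" x2] f1 f2 False by auto
    then show ?thesis using sub by auto
  qed
  then obtain y where y: "y \<in> J k" "f y = real j * h + h / 2" by blast
  define V where "V = {real j * h <..< real (Suc j) * h}"
  have V: "open V" "f y \<in> V" using y h_pos by (auto simp: V_def algebra_simps)
  have VH: "V \<subseteq> H j" using n1h by (auto simp: V_def H_def algebra_simps)
  obtain j' where j': "j' < n" "A k j' > 0" "H j' \<inter> V \<noteq> {}" using Apos[OF k y(1) V] by blast
  have "j' = j"
  proof (rule ccontr)
    assume "j' \<noteq> j"
    hence "H j' \<inter> H j = {}" using H_disj j' j by auto
    then show False using j'(3) VH by auto
  qed
  then show ?thesis using j' by simp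
qed

definition T :: "nat \<Rightarrow> nat \<Rightarrow> real" where
  "T i j = (if nd i j then 1/5 else 0) + (if i = j then (5 - real (card {j'. j' < n \<and> nd i j'})) / 5 else 0)"

lemma card_nd: "card {j'. j' < n \<and> nd i j'} \<le> 5"
proof -
  have "{j'. j' < n \<and> nd i j'} \<subseteq> {i - 2 .. i + 2}" by (auto simp: nd_def)
  hence "card {j'. j' < n \<and> nd i j'} \<le> card {i - 2 .. i + 2}" by (intro card_mono) auto
  also have "\<dots> \<le> 5" by simp
  finally show ?thesis .
qed

lemma nd_refl[simp]: "nd i i" by (simp add: nd_def)
lemma nd_sym: "nd i j = nd j i" by (auto simp: nd_def)

lemma card_nd_r: "real (card {j'. j' < n \<and> nd i j'}) \<le> 5"
  using card_nd[of i] by (metis of_nat_le_iff of_nat_numeral)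

lemma T_nonneg: "T i j \<ge> 0"
  using card_nd_r[of i] by (auto simp: T_def)

lemma T_pos: "T i j > 0 \<longleftrightarrow> nd i j"
proof
  assume "T i j > 0"
  then show "nd i j" by (auto simp: T_def split: if_splits)
next
  assume "nd i j"
  moreover have "0 \<le> (if i = j then (5 - real (card {j'. j' < n \<and> nd i j'})) / 5 else 0)"
    using card_nd_r[of i] by auto
  ultimately show "T i j > 0" unfolding T_def by simp
qed

lemma T_sym: "T i j = T j i"
  by (auto simp: T_def nd_sym)

lemma T_row: "i < n \<Longrightarrow> (\<Sum>j<n. T i j) = 1"
proof -
  assume i: "i < n"
  have "(\<Sum>j<n. T i j) = (\<Sum>j<n. (if nd i j then 1/5 else 0)) + (\<Sum>j<n. (if i = j then (5 - real (card {j'. j' < n \<and> nd i j'})) / 5 else 0))"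
    unfolding T_def by (simp add: sum.distrib)
  also have "(\<Sum>j<n. (if nd i j then 1/5 else 0)) = (\<Sum>j\<in>{j\<in>{..<n}. nd i j}. 1/5::real)"
    by (rule sum.inter_filter[symmetric]) simp
  also have "\<dots> = real (card {j'. j' < n \<and> nd i j'}) / 5"
  proof -
    have "{j\<in>{..<n}. nd i j} = {j'. j' < n \<and> nd i j'}" by auto
    then show ?thesis by simp
  qed
  also have "(\<Sum>j<n. (if i = j then (5 - real (card {j'. j' < n \<and> nd i j'})) / 5 else 0)) = (5 - real (card {j'. j' < n \<and> nd i j'})) / 5"
    using i by (simp add: sum.delta)
  finally show ?thesis by (simp add: field_simps)
qed

lemma T_col: "j < n \<Longrightarrow> (\<Sum>i<n. T i j) = 1"
  using T_row[of j] by (simp add: T_sym)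

definition B :: "nat \<Rightarrow> nat \<Rightarrow> real" where
  "B k j = (\<Sum>j'<n. A k j' * T j' j)"

lemma B_nonneg: "B k j \<ge> 0"
  unfolding B_def by (intro sum_nonneg mult_nonneg_nonneg A_nonneg T_nonneg)

lemma B_row: "k < n \<Longrightarrow> (\<Sum>j<n. B k j) = 1"
proof -
  assume k: "k < n"
  have "(\<Sum>j<n. B k j) = (\<Sum>j'<n. \<Sum>j<n. A k j' * T j' j)"
    unfolding B_def by (rule sum.swap)
  also have "\<dots> = (\<Sum>j'<n. A k j' * (\<Sum>j<n. T j' j))"
    by (simp add: sum_distrib_left)
  also have "\<dots> = (\<Sum>j'<n. A k j')" by (simp add: T_row)
  finally show ?thesis using A_row[OF k] by simp
qed


lemma B_col: "j < n \<Longrightarrow> (\<Sum>k<n. B k j) = 1"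
proof -
  assume j: "j < n"
  have "(\<Sum>k<n. B k j) = (\<Sum>j'<n. \<Sum>k<n. A k j' * T j' j)"
    unfolding B_def by (rule sum.swap)
  also have "\<dots> = (\<Sum>j'<n. (\<Sum>k<n. A k j') * T j' j)"
    by (simp add: sum_distrib_right)
  also have "\<dots> = (\<Sum>j'<n. T j' j)" by (simp add: A_col)
  finally show ?thesis using T_col[OF j] by simp
qed

lemma B_pos: "B k j > 0 \<longleftrightarrow> (\<exists>j'<n. A k j' > 0 \<and> nd j' j)"
proof
  assume "B k j > 0"
  hence "B k j \<noteq> 0" by simp
  then obtain j' where j': "j' \<in> {..<n}" "A k j' * T j' j \<noteq> 0" unfolding B_def
    using sum.not_neutral_contains_not_neutral by blast
  hence "A k j' \<noteq> 0" "T j' j \<noteq> 0" by auto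
  hence "A k j' > 0" "T j' j > 0" using A_nonneg[of k j'] T_nonneg[of j' j] by linarith+
  then show "\<exists>j'<n. A k j' > 0 \<and> nd j' j" using j'(1) T_pos by auto
next
  assume "\<exists>j'<n. A k j' > 0 \<and> nd j' j"
  then obtain j' where j': "j' < n" "A k j' > 0" "nd j' j" by blast
  have "0 < A k j' * T j' j" using j' T_pos by simp
  also have "A k j' * T j' j \<le> B k j" unfolding B_def
    by (rule member_le_sum) (use j' in \<open>auto intro: mult_nonneg_nonneg A_nonneg T_nonneg\<close>)
  finally show "B k j > 0" .
qed

definition Sp :: "nat \<Rightarrow> nat set" where "Sp k = {j. j < n \<and> B k j > 0}"
definition P :: "nat \<Rightarrow> nat" where "P k = Min (Sp k)"
definition Q :: "nat \<Rightarrow> nat" where "Q k = Max (Sp k)"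

lemma Sp_fin: "finite (Sp k)" by (simp add: Sp_def)
lemma Sp_ne: "k < n \<Longrightarrow> Sp k \<noteq> {}"
proof
  assume k: "k < n" and e: "Sp k = {}"
  have "\<forall>j<n. B k j = 0"
  proof (intro allI impI)
    fix j assume "j < n"
    hence "\<not> B k j > 0" using e by (auto simp: Sp_def)
    then show "B k j = 0" using B_nonneg[of k j] by linarith
  qed
  hence "(\<Sum>j<n. B k j) = 0" by simp
  then show False using B_row[OF k] by simp
qed

lemma PQ: "k < n \<Longrightarrow> P k \<in> Sp k \<and> Q k \<in> Sp k \<and> P k \<le> Q k \<and> Q k < n"
proof -
  assume k: "k < n"
  have a: "P k \<in> Sp k" unfolding P_def using Sp_fin Sp_ne[OF k] by (rule Min_in)
  have b: "Q k \<in> Sp k" unfolding Q_def using Sp_fin Sp_ne[OF k] by (rule Max_in)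
  have c: "P k \<le> Q k" unfolding P_def using Sp_fin b by (rule Min_le)
  have d: "Q k < n" using b by (simp add: Sp_def)
  show ?thesis using a b c d by blast
qed

lemma Sp_bounds: "j \<in> Sp k \<Longrightarrow> P k \<le> j \<and> j \<le> Q k"
  unfolding P_def Q_def using Sp_fin[of k] by (simp add: Min_le Max_ge)

lemma B_interval:
  assumes k: "k < n" and j: "P k \<le> j" "j \<le> Q k"
  shows "B k j > 0"
proof -
  have pq: "P k \<in> Sp k" "Q k \<in> Sp k" "Q k < n" using PQ[OF k] by auto
  obtain j1 where j1: "j1 < n" "A k j1 > 0" "nd j1 (P k)" using pq(1) B_pos by (auto simp: Sp_def)
  obtain j2 where j2: "j2 < n" "A k j2 > 0" "nd j2 (Q k)" using pq(2) B_pos by (auto simp: Sp_def)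
  have jn: "j < n" using j pq by simp
  show ?thesis
  proof (cases "nd j1 j")
    case True then show ?thesis using j1 B_pos by auto
  next
    case F1: False
    show ?thesis
    proof (cases "nd j2 j")
      case True then show ?thesis using j2 B_pos by auto
    next
      case False
      have "j1 < j" using F1 j1(3) j by (auto simp: nd_def)
      moreover have "j < j2" using False j2(3) j by (auto simp: nd_def)
      ultimately have "A k j > 0" using Aint[OF k _ _ j2(1) j1(2) j2(2)] by blast
      then show ?thesis using jn B_pos by auto
    qed
  qed
qed

lemma B_supp_iff: "k < n \<Longrightarrow> j < n \<Longrightarrow> B k j > 0 \<longleftrightarrow> P k \<le> j \<and> j \<le> Q k"
proof -
  assume k: "k < n" and j: "j < n"
  show ?thesis
  proof
    assume "B k j > 0" then show "P k \<le> j \<and> j \<le> Q k" using Sp_bounds j by (simp add: Sp_def)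
  next
    assume "P k \<le> j \<and> j \<le> Q k" then show "B k j > 0" using B_interval[OF k] by blast
  qed
qed

end


context cstr begin

definition cc :: "nat \<Rightarrow> nat" where
  "cc k = max 1 (min (n - 1) (nat \<lfloor>f (real k * h) * real n\<rfloor>))"

lemma cc_range: "1 \<le> cc k \<and> cc k \<le> n - 1" using n2 by (simp add: cc_def)

lemma grid_I: "k \<le> n \<Longrightarrow> real k * h \<in> I01"
proof -
  assume "k \<le> n"
  hence "real k * h \<le> real n * h" using h_pos by (intro mult_right_mono) auto
  then show ?thesis using nh h_pos by (simp add: I01_def)
qed

lemma cc_close: "k \<le> n \<Longrightarrow> \<bar>real (cc k) * h - f (real k * h)\<bar> \<le> h"
proof -
  assume k: "k \<le> n"
  define y where "y = f (real k * h)"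
  have yI: "0 \<le> y" "y \<le> 1" using fI[OF grid_I[OF k]] by (auto simp: y_def I01_def)
  define m where "m = nat \<lfloor>y * real n\<rfloor>"
  have yn0: "0 \<le> y * real n" using yI by simp
  have m1: "real m \<le> y * real n" using yn0 by (simp add: m_def of_nat_floor)
  have m2: "y * real n < real m + 1" using yn0 by (simp add: m_def)
  have yn: "y * real n \<le> real n" using yI n2 by (simp add: mult_le_cancel_right1)
  have ccm: "cc k = max 1 (min (n - 1) m)" by (simp add: cc_def y_def m_def)
  have r1: "real (n - 1) = real n - 1" using n2 by (simp add: of_nat_diff)
  have "real (cc k) \<le> y * real n + 1 \<and> y * real n \<le> real (cc k) + 1"
  proof (cases "m = 0")
    case True
    then show ?thesis using ccm m2 yn0 n2 by (simp add: max_def min_def)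
  next
    case False
    show ?thesis
    proof (cases "m \<le> n - 1")
      case True
      hence "cc k = m" using False ccm by simp
      then show ?thesis using m1 m2 by simp
    next
      case F2: False
      hence "cc k = n - 1" using ccm n2 by simp
      moreover have "real n - 1 \<le> y * real n" using F2 m1 by (simp add: r1)
      ultimately show ?thesis using yn r1 by simp
    qed
  qed
  hence "\<bar>real (cc k) - y * real n\<bar> \<le> 1" by linarith
  hence "\<bar>real (cc k) - y * real n\<bar> * h \<le> h" using h_pos by simp
  moreover have "(real (cc k) - y * real n) * h = real (cc k) * h - y"
    using nh by (simp add: algebra_simps)
  hence "\<bar>real (cc k) - y * real n\<bar> * h = \<bar>real (cc k) * h - y\<bar>"
    using h_pos by (metis abs_mult abs_of_pos)
  ultimately show ?thesis by (simp add: y_def)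
qed

lemma key_c:
  assumes k: "k < n" and k': "k' = k \<or> k' = Suc k"
  shows "P k < cc k' \<and> cc k' \<le> Q k"
proof -
  define y where "y = real k' * h"
  have yJ: "y \<in> J k" using k' h_pos by (auto simp: y_def J_def)
  have k'n: "k' \<le> n" using k k' by auto
  obtain j' where j': "j' < n" "A k j' > 0" "H j' \<inter> ball (f y) h \<noteq> {}"
    using Apos[OF k yJ, of "ball (f y) h"] h_pos by auto
  then obtain u where u: "u \<in> H j'" "dist (f y) u < h" by auto
  have "u \<in> J j'" using u(1) H_sub_J by blast
  hence uJ: "real j' * h \<le> u" "u \<le> real (Suc j') * h" by (simp_all add: J_def)
  have cl: "\<bar>real (cc k') * h - f y\<bar> \<le> h" using cc_close[OF k'n] by (simp add: y_def)
  have d: "\<bar>f y - u\<bar> < h" using u(2) by (simp add: dist_real_def)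
  have "real (cc k') * h < real (j' + 3) * h" using uJ d cl by (simp add: algebra_simps abs_less_iff abs_le_iff)
  hence "real (cc k') < real (j' + 3)" using mult_less_cancel_right_pos[OF h_pos] by blast
  hence a: "cc k' \<le> j' + 2" by simp
  have "real j' * h < real (cc k' + 2) * h" using uJ d cl by (simp add: algebra_simps abs_less_iff abs_le_iff)
  hence "real j' < real (cc k' + 2)" using mult_less_cancel_right_pos[OF h_pos] by blast
  hence b: "j' \<le> cc k' + 1" by simp
  have cr: "1 \<le> cc k'" "cc k' \<le> n - 1" using cc_range by auto
  have "nd j' (cc k' - 1)" "nd j' (cc k')" using a b cr by (auto simp: nd_def)
  hence "B k (cc k' - 1) > 0" "B k (cc k') > 0" using j' B_pos by auto
  moreover have "cc k' - 1 < n" "cc k' < n" using cr n2 by auto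
  ultimately have "P k \<le> cc k' - 1" "cc k' \<le> Q k" using B_supp_iff[OF k] by auto
  then show ?thesis using cr by auto
qed

definition vs :: "nat \<Rightarrow> nat list" where
  "vs k = path3 (cc k) (P k) (Q k) (cc (Suc k))"

lemma vs_props: "k < n \<Longrightarrow> vs k \<noteq> [] \<and> hd (vs k) = cc k \<and> last (vs k) = cc (Suc k) \<and> adj (vs k)
   \<and> set (vs k) = {P k..Suc (Q k)}"
  unfolding vs_def using key_c[of k k] key_c[of k "Suc k"] by (intro path3_props) auto

lemma vs_MinMax: "k < n \<Longrightarrow> Min (set (vs k)) = P k \<and> Max (set (vs k)) = Suc (Q k)"
proof -
  assume k: "k < n"
  have s: "set (vs k) = {P k..Suc (Q k)}" using vs_props[OF k] by simp
  have "P k \<le> Suc (Q k)" using PQ[OF k] by simp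
  have "Min {P k..Suc (Q k)} = P k" using \<open>P k \<le> Suc (Q k)\<close> by (intro Min_eqI) auto
  moreover have "Max {P k..Suc (Q k)} = Suc (Q k)" using \<open>P k \<le> Suc (Q k)\<close> by (intro Max_eqI) auto
  ultimately show ?thesis unfolding s by simp
qed

lemma cells_vs: "k < n \<Longrightarrow> set (cells (vs k)) = {P k..Q k}"
proof -
  assume k: "k < n"
  have v: "adj (vs k)" "vs k \<noteq> []" using vs_props[OF k] by auto
  have "set (cells (vs k)) = {Min (set (vs k)) ..< Max (set (vs k))}"
    using cells_set[OF v] .
  also have "\<dots> = {P k..<Suc (Q k)}" using vs_MinMax[OF k] by simp
  also have "\<dots> = {P k..Q k}" by auto
  finally show ?thesis .
qed

end

lemma sum_list_count_gen:
  fixes f :: "'b \<Rightarrow> 'a::comm_semiring_1"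
  shows "sum_list (map f xs) = (\<Sum>x\<in>set xs. of_nat (count_list xs x) * f x)"
proof (induction xs)
  case (Cons x xs)
  have e: "(\<Sum>y\<in>set (x#xs). of_nat (count_list (x#xs) y) * f y)
      = (\<Sum>y\<in>insert x (set xs). of_nat (count_list xs y) * f y + (if x = y then f y else 0))"
    by (rule sum.cong) (auto simp: algebra_simps)
  show ?case
  proof (cases "x \<in> set xs")
    case True
    hence i: "insert x (set xs) = set xs" by auto
    have "(\<Sum>y\<in>set xs. of_nat (count_list xs y) * f y + (if x = y then f y else 0))
       = (\<Sum>y\<in>set xs. of_nat (count_list xs y) * f y) + f x"
      using True by (simp add: sum.distrib sum.delta)
    then show ?thesis using e Cons i by (simp add: add.commute)
  next
    case False
    have c0: "count_list xs x = 0" using False by (simp add: count_list_0_iff)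
    have "(\<Sum>y\<in>insert x (set xs). of_nat (count_list xs y) * f y + (if x = y then f y else 0))
       = (\<Sum>y\<in>set xs. of_nat (count_list xs y) * f y) + f x"
      using False c0 by (simp add: sum.distrib sum.delta)
    then show ?thesis using e Cons by (simp add: add.commute)
  qed
qed simp

context cstr begin

definition Lk :: "nat \<Rightarrow> nat \<Rightarrow> real" where
  "Lk k j = B k j * h / real (count_list (cells (vs k)) j)"

lemma count_pos: "j \<in> set xs \<Longrightarrow> count_list xs j > 0"
  by (induction xs) auto

lemma Lpos_vs: "k < n \<Longrightarrow> Lpos (Lk k) (vs k)"
  unfolding Lpos_def
proof
  fix j assume k: "k < n" and j: "j \<in> set (cells (vs k))"
  hence "P k \<le> j" "j \<le> Q k" using cells_vs[OF k] by auto
  hence "B k j > 0" using B_interval[OF k] by auto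
  moreover have "count_list (cells (vs k)) j > 0" using count_pos[OF j] .
  ultimately show "Lk k j > 0" using h_pos by (simp add: Lk_def)
qed

lemma sum_B_PQ: "k < n \<Longrightarrow> (\<Sum>j\<in>{P k..Q k}. B k j) = 1"
proof -
  assume k: "k < n"
  have "(\<Sum>j<n. B k j) = (\<Sum>j\<in>{P k..Q k}. B k j)"
  proof (rule sum.mono_neutral_right)
    show "{P k..Q k} \<subseteq> {..<n}" using PQ[OF k] by auto
    show "\<forall>i\<in>{..<n} - {P k..Q k}. B k i = 0"
    proof
      fix i assume "i \<in> {..<n} - {P k..Q k}"
      hence "\<not> B k i > 0" using B_supp_iff[OF k] by auto
      then show "B k i = 0" using B_nonneg[of k i] by linarith
    qed
  qed simp
  then show ?thesis using B_row[OF k] by simp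
qed

lemma endx_vs: "k < n \<Longrightarrow> endx (Lk k) (real k * h) (vs k) = real (Suc k) * h"
proof -
  assume k: "k < n"
  have "sum_list (map (Lk k) (cells (vs k))) = (\<Sum>j\<in>set (cells (vs k)). real (count_list (cells (vs k)) j) * Lk k j)"
    by (rule sum_list_count_gen)
  also have "\<dots> = (\<Sum>j\<in>{P k..Q k}. B k j * h)"
  proof (rule sum.cong)
    show "set (cells (vs k)) = {P k..Q k}" using cells_vs[OF k] .
    fix j assume "j \<in> {P k..Q k}"
    hence "j \<in> set (cells (vs k))" using cells_vs[OF k] by simp
    hence "count_list (cells (vs k)) j > 0" by (rule count_pos)
    then show "real (count_list (cells (vs k)) j) * Lk k j = B k j * h" by (simp add: Lk_def)
  qed
  also have "\<dots> = h" using sum_B_PQ[OF k] by (simp add: sum_distrib_right[symmetric])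
  finally show ?thesis by (simp add: endx_def algebra_simps)
qed

end


context cstr begin

definition pk :: "nat \<Rightarrow> real \<Rightarrow> real" where
  "pk k = plv h (Lk k) (real k * h) (vs k)"

definition F :: "real \<Rightarrow> real" where
  "F x = pk (cidx x) x"

lemma J_alt: "k < n \<Longrightarrow> J k = {real k * h .. endx (Lk k) (real k * h) (vs k)}"
  using endx_vs by (simp add: J_def)

lemma pk_start: "k < n \<Longrightarrow> pk k (real k * h) = real (cc k) * h"
  using vs_props[of k] Lpos_vs[of k] by (simp add: pk_def plv_start)

lemma pk_end: "k < n \<Longrightarrow> pk k (real (Suc k) * h) = real (cc (Suc k)) * h"
  using vs_props[of k] Lpos_vs[of k] plv_end[of "Lk k" "vs k" h "real k * h"] endx_vs[of k]
  by (simp add: pk_def)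

lemma x_in_J: "x \<in> I01 \<Longrightarrow> x \<in> J (cidx x)"
  using in_H_cidx H_sub_J by blast

lemma F_J:
  assumes k: "k < n" and x: "x \<in> J k"
  shows "F x = pk k x"
proof (cases "x \<in> H k")
  case True
  hence "cidx x = k" using H_cidx[OF k] by simp
  then show ?thesis by (simp add: F_def)
next
  case False
  hence xe: "x = real (Suc k) * h" using J_minus_H[OF k] x by auto
  have k1: "Suc k < n"
  proof (rule ccontr)
    assume "\<not> Suc k < n"
    hence "k = n - 1" using k by simp
    hence "H k = J k"
      using nh n2 by (auto simp: H_def J_def)
    then show False using False x by simp
  qed
  have "real (Suc k) * h \<in> I01" using k1 by (intro grid_I) simp
  hence "x \<in> H (Suc k)" using xe k1 h_pos by (auto simp: H_def I01_def)
  hence "cidx x = Suc k" using H_cidx[OF k1] by simp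
  hence "F x = pk (Suc k) (real (Suc k) * h)" by (simp add: F_def xe)
  also have "\<dots> = real (cc (Suc k)) * h" using pk_start[OF k1] .
  also have "\<dots> = pk k x" using pk_end[OF k] xe by simp
  finally show ?thesis .
qed

lemma F_grid: "k \<le> n \<Longrightarrow> F (real k * h) = real (cc k) * h"
proof (cases "k < n")
  case True
  then show ?thesis using F_J[OF True] pk_start[OF True] h_pos by (simp add: J_def)
next
  case False
  assume "k \<le> n"
  hence kn: "k = Suc (n - 1)" using False n2 by simp
  have l: "n - 1 < n" using n2 by simp
  have "real k * h \<in> J (n - 1)" using kn h_pos by (auto simp: J_def)
  hence "F (real k * h) = pk (n - 1) (real k * h)" using F_J[OF l] by blast
  also have "\<dots> = real (cc k) * h" using pk_end[OF l] kn by simp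
  finally show ?thesis .
qed

lemma pk_cont: "k < n \<Longrightarrow> continuous_on (J k) (pk k)"
  using plv_cont[OF Lpos_vs[of k]] J_alt[of k] by (simp add: pk_def)

lemma F_cont_J: "k < n \<Longrightarrow> continuous_on (J k) F"
proof -
  assume k: "k < n"
  show ?thesis by (rule continuous_on_eq[OF pk_cont[OF k]]) (simp add: F_J[OF k])
qed

lemma F_cont: "continuous_on I01 F"
proof -
  have "m \<le> n \<Longrightarrow> continuous_on {0..real m * h} F" for m
  proof (induction m)
    case 0
    then show ?case by simp
  next
    case (Suc m)
    hence m: "m < n" by simp
    obtain c where c: "c = real m * h" by blast
    have c0: "0 \<le> c" using h_pos c by simp
    have c1: "real (Suc m) * h = c + h" using c by (simp add: algebra_simps)
    have "{0..c + h} = {0..c} \<union> {c..c+h}" using c0 h_pos by auto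
    hence "{0..real (Suc m) * h} = {0..real m * h} \<union> J m"
      unfolding J_def c1 c[symmetric] by simp
    moreover have "continuous_on ({0..real m * h} \<union> J m) F"
      using Suc m F_cont_J[OF m] by (intro continuous_on_closed_Un) (auto simp: J_def)
    ultimately show ?case by simp
  qed
  from this[of n] show ?thesis using nh by (simp add: I01_def)
qed

lemma F_range:
  assumes k: "k < n" and x: "x \<in> J k"
  shows "real (P k) * h \<le> F x \<and> F x \<le> real (Suc (Q k)) * h"
proof -
  have "real (Min (set (vs k))) * h \<le> pk k x \<and> pk k x \<le> real (Max (set (vs k))) * h"
    unfolding pk_def using vs_props[OF k] Lpos_vs[OF k] x J_alt[OF k] h_pos
    by (intro plv_range) auto
  then show ?thesis using vs_MinMax[OF k] F_J[OF k x] by simp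
qed

lemma F_attain:
  assumes k: "k < n" and u: "u = P k \<or> u = Suc (Q k)"
  shows "\<exists>t\<in>J k. F t = real u * h"
proof -
  have "u \<in> set (vs k)" using vs_props[OF k] u PQ[OF k] by auto
  then obtain t where t: "t \<in> J k" "pk k t = real u * h"
    using plv_attain[OF Lpos_vs[OF k]] J_alt[OF k] unfolding pk_def by blast
  then show ?thesis using F_J[OF k] by auto
qed

lemma F_I: "x \<in> I01 \<Longrightarrow> F x \<in> I01"
proof -
  assume x: "x \<in> I01"
  define k where "k = cidx x"
  have k: "k < n" by (simp add: k_def cidx_lt)
  have r: "real (P k) * h \<le> F x \<and> F x \<le> real (Suc (Q k)) * h"
    using F_range[OF k] x_in_J[OF x] by (simp add: k_def)
  have "real (Suc (Q k)) * h \<le> real n * h" using PQ[OF k] h_pos by (intro mult_right_mono) auto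
  moreover have "0 \<le> real (P k) * h" using h_pos by simp
  ultimately show ?thesis using r nh unfolding I01_def by auto
qed

definition SK :: "real set" where "SK = (\<Union>k<n. knots (Lk k) (real k * h) (vs k))"

lemma F_pa: "piecewise_affine F"
  unfolding piecewise_affine_def
proof (intro exI[of _ SK] conjI ballI)
  show "finite SK" unfolding SK_def using knots_props Lpos_vs by auto
  fix x assume x: "x \<in> I01 - SK"
  define k where "k = cidx x"
  have k: "k < n" by (simp add: k_def cidx_lt)
  have xH: "x \<in> H k" using x in_H_cidx by (simp add: k_def)
  hence xJ: "x \<in> J k" using H_sub_J by auto
  have kn: "knots (Lk k) (real k * h) (vs k) \<subseteq> SK" using k by (auto simp: SK_def)
  have kp: "real k * h \<in> knots (Lk k) (real k * h) (vs k)" "endx (Lk k) (real k * h) (vs k) \<in> knots (Lk k) (real k * h) (vs k)"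
    using knots_props[OF Lpos_vs[OF k]] by auto
  have "x \<in> {real k * h <..< endx (Lk k) (real k * h) (vs k)} - knots (Lk k) (real k * h) (vs k)"
  proof -
    have "x \<notin> knots (Lk k) (real k * h) (vs k)" using x kn by auto
    hence "x \<noteq> real k * h" "x \<noteq> endx (Lk k) (real k * h) (vs k)" using kp by auto
    then show ?thesis using xJ J_alt[OF k] \<open>x \<notin> knots (Lk k) (real k * h) (vs k)\<close> by auto
  qed
  then obtain e a b where e: "e > 0" "\<forall>s. \<bar>s - x\<bar> < e \<longrightarrow> real k * h < s \<and> s < endx (Lk k) (real k * h) (vs k) \<and> pk k s = a * s + b"
    using plv_affine[OF Lpos_vs[OF k]] unfolding pk_def by blast
  show "\<exists>e>0. \<exists>a b. \<forall>y\<in>I01. \<bar>y - x\<bar> < e \<longrightarrow> F y = a * y + b"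
  proof -
    have "\<forall>y\<in>I01. \<bar>y - x\<bar> < e \<longrightarrow> F y = a * y + b"
    proof (intro ballI impI)
      fix y assume "y \<in> I01" "\<bar>y - x\<bar> < e"
      hence "real k * h < y \<and> y < endx (Lk k) (real k * h) (vs k) \<and> pk k y = a * y + b" using e by blast
      hence "y \<in> J k" "pk k y = a * y + b" using J_alt[OF k] by auto
      then show "F y = a * y + b" using F_J[OF k] by simp
    qed
    then show ?thesis using e(1) by blast
  qed
qed

end


context cstr begin

lemma null_diff:
  assumes "E \<in> sets borel" "S \<in> sets borel" "E - S \<subseteq> {p}"
  shows "emeasure lborel (E \<inter> S) = emeasure lborel E"
proof -
  have N: "E - S \<in> null_sets lborel"
  proof -
    have "{p} \<in> null_sets lborel" by (rule finite_imp_null_set_lborel) simp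
    then show ?thesis by (rule null_sets_subset) (use assms in auto)
  qed
  have "E \<inter> S = E - (E - S)" by auto
  then show ?thesis using emeasure_Diff_null_set[OF N, of E] assms by simp
qed

lemma pk_measure:
  assumes k: "k < n" and X: "X \<in> sets borel"
  shows "{x \<in> J k. pk k x \<in> X} \<in> sets borel \<and>
    emeasure lborel {x \<in> J k. pk k x \<in> X} = (\<Sum>j<n. ennreal (B k j) * emeasure lborel (X \<inter> J j))"
proof -
  have pm: "{t \<in> {real k * h..endx (Lk k) (real k * h) (vs k)}. pk k t \<in> X} \<in> sets borel \<and>
    emeasure lborel {t \<in> {real k * h..endx (Lk k) (real k * h) (vs k)}. pk k t \<in> X} =
    sum_list (map (\<lambda>j. ennreal (Lk k j / h) * emeasure lborel (X \<inter> {real j * h .. real (j + 1) * h})) (cells (vs k)))"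
    unfolding pk_def using plv_measure[OF Lpos_vs[OF k] _ h_pos X] vs_props[OF k] by blast
  have e1: "{t \<in> {real k * h..endx (Lk k) (real k * h) (vs k)}. pk k t \<in> X} = {x \<in> J k. pk k x \<in> X}"
    using J_alt[OF k] by simp
  have m1: "{x \<in> J k. pk k x \<in> X} \<in> sets borel" using pm unfolding e1 by (rule conjunct1)
  have m2: "emeasure lborel {x \<in> J k. pk k x \<in> X} = sum_list (map (\<lambda>j. ennreal (Lk k j / h) * emeasure lborel (X \<inter> {real j * h .. real (j + 1) * h})) (cells (vs k)))"
    using pm unfolding e1 by (rule conjunct2)
  have "sum_list (map (\<lambda>j. ennreal (Lk k j / h) * emeasure lborel (X \<inter> {real j * h .. real (j + 1) * h})) (cells (vs k)))
     = (\<Sum>j\<in>set (cells (vs k)). of_nat (count_list (cells (vs k)) j) * (ennreal (Lk k j / h) * emeasure lborel (X \<inter> {real j * h .. real (j + 1) * h})))"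
    by (rule sum_list_count_gen)
  also have "\<dots> = (\<Sum>j\<in>{P k..Q k}. ennreal (B k j) * emeasure lborel (X \<inter> J j))"
  proof (rule sum.cong)
    show "set (cells (vs k)) = {P k..Q k}" using cells_vs[OF k] .
    fix j assume "j \<in> {P k..Q k}"
    hence "j \<in> set (cells (vs k))" using cells_vs[OF k] by simp
    hence c: "count_list (cells (vs k)) j > 0" by (rule count_pos)
    have "of_nat (count_list (cells (vs k)) j) * ennreal (Lk k j / h) = ennreal (real (count_list (cells (vs k)) j)) * ennreal (Lk k j / h)"
      by (simp only: ennreal_of_nat_eq_real_of_nat)
    also have "\<dots> = ennreal (real (count_list (cells (vs k)) j) * (Lk k j / h))"
      by (rule ennreal_mult[symmetric]) (use B_nonneg[of k j] h_pos in \<open>auto simp: Lk_def\<close>)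
    also have "real (count_list (cells (vs k)) j) * (Lk k j / h) = B k j" using c h_pos by (simp add: Lk_def)
    finally have "of_nat (count_list (cells (vs k)) j) * ennreal (Lk k j / h) = ennreal (B k j)" .
    moreover have "{real j * h .. real (j + 1) * h} = J j" by (simp add: J_def)
    ultimately show "of_nat (count_list (cells (vs k)) j) * (ennreal (Lk k j / h) * emeasure lborel (X \<inter> {real j * h .. real (j + 1) * h}))
        = ennreal (B k j) * emeasure lborel (X \<inter> J j)" by (simp add: mult.assoc[symmetric])
  qed
  also have "\<dots> = (\<Sum>j<n. ennreal (B k j) * emeasure lborel (X \<inter> J j))"
  proof (rule sum.mono_neutral_left)
    show "{P k..Q k} \<subseteq> {..<n}" using PQ[OF k] by auto
    show "\<forall>i\<in>{..<n} - {P k..Q k}. ennreal (B k i) * emeasure lborel (X \<inter> J i) = 0"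
    proof
      fix i assume "i \<in> {..<n} - {P k..Q k}"
      hence "\<not> B k i > 0" using B_supp_iff[OF k] by auto
      hence "B k i = 0" using B_nonneg[of k i] by linarith
      then show "ennreal (B k i) * emeasure lborel (X \<inter> J i) = 0" by simp
    qed
  qed simp
  finally show ?thesis using m1 m2 by (rule_tac conjI) simp_all
qed

lemma F_pres:
  assumes X: "X \<in> sets borel" and AI: "X \<subseteq> I01"
  shows "emeasure lborel {x \<in> I01. F x \<in> X} = emeasure lborel X"
proof -
  define S where "S k = {x \<in> J k. pk k x \<in> X} \<inter> H k" for k
  have SF: "S k = {x \<in> H k. F x \<in> X}" if k: "k < n" for k
  proof (rule set_eqI)
    fix x
    show "x \<in> S k \<longleftrightarrow> x \<in> {x \<in> H k. F x \<in> X}"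
    proof (cases "x \<in> H k")
      case True
      hence "x \<in> J k" using H_sub_J[of k] by blast
      then show ?thesis using F_J[OF k] True unfolding S_def by auto
    qed (auto simp: S_def)
  qed
  have Sm: "S k \<in> sets borel" if k: "k < n" for k
    unfolding S_def using pk_measure[OF k X] by auto
  have Se: "emeasure lborel (S k) = (\<Sum>j<n. ennreal (B k j) * emeasure lborel (X \<inter> J j))" if k: "k < n" for k
  proof -
    have "emeasure lborel (S k) = emeasure lborel {x \<in> J k. pk k x \<in> X}"
      unfolding S_def
      by (rule null_diff[where p = "real (Suc k) * h"]) (use pk_measure[OF k X] J_minus_H[OF k] in auto)
    then show ?thesis using pk_measure[OF k X] by simp
  qed
  have U: "{x \<in> I01. F x \<in> X} = (\<Union>k<n. S k)"
    using I_Union SF by auto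
  have "emeasure lborel (\<Union>k<n. S k) = (\<Sum>k<n. emeasure lborel (S k))"
  proof (rule sum_emeasure[symmetric])
    show "disjoint_family_on S {..<n}" using H_disj by (auto simp: disjoint_family_on_def S_def)
  qed (use Sm in auto)
  also have "\<dots> = (\<Sum>k<n. \<Sum>j<n. ennreal (B k j) * emeasure lborel (X \<inter> J j))" using Se by simp
  also have "\<dots> = (\<Sum>j<n. \<Sum>k<n. ennreal (B k j) * emeasure lborel (X \<inter> J j))" by (rule sum.swap)
  also have "\<dots> = (\<Sum>j<n. (\<Sum>k<n. ennreal (B k j)) * emeasure lborel (X \<inter> J j))"
    by (simp add: sum_distrib_right)
  also have "\<dots> = (\<Sum>j<n. emeasure lborel (X \<inter> H j))"
  proof (rule sum.cong)
    fix j assume "j \<in> {..<n}"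
    hence j: "j < n" by simp
    have "(\<Sum>k<n. ennreal (B k j)) = ennreal (\<Sum>k<n. B k j)" using B_nonneg by (simp add: sum_ennreal)
    also have "\<dots> = 1" using B_col[OF j] by simp
    finally have "(\<Sum>k<n. ennreal (B k j)) = 1" .
    moreover have "emeasure lborel (X \<inter> J j \<inter> H j) = emeasure lborel (X \<inter> J j)"
      by (rule null_diff[where p = "real (Suc j) * h"]) (use X J_minus_H[OF j] in auto)
    moreover have "X \<inter> J j \<inter> H j = X \<inter> H j" using H_sub_J by auto
    ultimately show "(\<Sum>k<n. ennreal (B k j)) * emeasure lborel (X \<inter> J j) = emeasure lborel (X \<inter> H j)" by simp
  qed simp
  also have "\<dots> = emeasure lborel (\<Union>j<n. X \<inter> H j)"
  proof (rule sum_emeasure)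
    show "disjoint_family_on (\<lambda>j. X \<inter> H j) {..<n}" using H_disj by (auto simp: disjoint_family_on_def)
  qed (use X in auto)
  also have "(\<Union>j<n. X \<inter> H j) = X" using AI I_Union by auto
  finally show ?thesis using U by simp
qed

lemma F_C: "F \<in> C_lambda"
  unfolding C_lambda_def using F_cont F_I F_pres by auto

end


lemma interval_core:
  fixes g :: "real \<Rightarrow> real"
  assumes uv: "u \<le> v" and gc: "continuous_on {u..v} g" and le: "g u \<le> g v"
  shows "\<exists>u' v'. u \<le> u' \<and> u' \<le> v' \<and> v' \<le> v \<and> g ` {u'..v'} = {g u..g v}"
proof -
  define c where "c = g u"
  define d where "d = g v"
  define U where "U = {u..v} \<inter> g -` {c}"
  have Uc: "closed U" unfolding U_def using gc by (intro continuous_closed_preimage) auto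
  have Une: "U \<noteq> {}" using uv by (auto simp: U_def c_def)
  have Ub: "bdd_above U" unfolding U_def by (rule bdd_above_Int1) simp
  define u' where "u' = Sup U"
  have u'U: "u' \<in> U" unfolding u'_def using closed_contains_Sup[OF Une Ub Uc] .
  have u'max: "t \<in> U \<Longrightarrow> t \<le> u'" for t unfolding u'_def using Ub by (rule cSup_upper[rotated])
  have u'1: "u \<le> u'" "u' \<le> v" "g u' = c" using u'U by (auto simp: U_def)
  define V where "V = {u'..v} \<inter> g -` {d}"
  have Vc: "closed V" unfolding V_def using gc u'1 by (intro continuous_closed_preimage) (auto intro: continuous_on_subset)
  have Vne: "V \<noteq> {}" using u'1 by (auto simp: V_def d_def)
  have Vb: "bdd_below V" unfolding V_def by (rule bdd_below_Int1) simp
  define v' where "v' = Inf V"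
  have v'V: "v' \<in> V" unfolding v'_def using closed_contains_Inf[OF Vne Vb Vc] .
  have v'min: "t \<in> V \<Longrightarrow> v' \<le> t" for t unfolding v'_def using Vb by (rule cInf_lower[rotated])
  have v'1: "u' \<le> v'" "v' \<le> v" "g v' = d" using v'V by (auto simp: V_def)
  have gc': "continuous_on {u'..v'} g" using gc u'1 v'1 by (auto intro: continuous_on_subset)
  have "g ` {u'..v'} = {c..d}"
  proof
    show "{c..d} \<subseteq> g ` {u'..v'}"
    proof
      fix y assume "y \<in> {c..d}"
      then obtain t where "u' \<le> t" "t \<le> v'" "g t = y"
        using IVT'[of g u' y v'] u'1 v'1 gc' by auto
      then show "y \<in> g ` {u'..v'}" by auto
    qed
    show "g ` {u'..v'} \<subseteq> {c..d}"
    proof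
      fix y assume "y \<in> g ` {u'..v'}"
      then obtain t where t: "u' \<le> t" "t \<le> v'" "y = g t" by auto
      have "c \<le> g t"
      proof (rule ccontr)
        assume a: "\<not> c \<le> g t"
        have ct: "continuous_on {t..v'} g" using gc' t by (auto intro: continuous_on_subset)
        obtain s where s: "t \<le> s" "s \<le> v'" "g s = c"
          using IVT'[of g t c v'] a v'1 t ct le by (auto simp: c_def d_def)
        have "t \<noteq> u'" using a u'1 by auto
        hence "u' < s" using s t by auto
        moreover have "s \<in> U" using s u'1 v'1 t by (auto simp: U_def)
        ultimately show False using u'max by force
      qed
      moreover have "g t \<le> d"
      proof (rule ccontr)
        assume a: "\<not> g t \<le> d"
        have ct: "continuous_on {u'..t} g" using gc' t by (auto intro: continuous_on_subset)
        obtain s where s: "u' \<le> s" "s \<le> t" "g s = d"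
          using IVT'[of g u' d t] a u'1 t ct le by (auto simp: c_def d_def)
        have "t \<noteq> v'" using a v'1 by auto
        hence "s < v'" using s t by auto
        moreover have "s \<in> V" using s u'1 v'1 t by (auto simp: V_def)
        ultimately show False using v'min by force
      qed
      ultimately show "y \<in> {c..d}" using t by simp
    qed
  qed
  then show ?thesis using u'1 v'1 by (auto simp: c_def d_def)
qed

lemma interval_pre:
  fixes g :: "real \<Rightarrow> real"
  assumes gc: "continuous_on {a..b} g" and cd: "c \<le> d" and sub: "{c..d} \<subseteq> g ` {a..b}"
  shows "\<exists>a' b'. a \<le> a' \<and> a' \<le> b' \<and> b' \<le> b \<and> g ` {a'..b'} = {c..d}"
proof -
  obtain u where u: "u \<in> {a..b}" "g u = c" using sub cd by (metis atLeastAtMost_iff image_iff order_refl subsetD)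
  obtain v where v: "v \<in> {a..b}" "g v = d" using sub cd by (metis atLeastAtMost_iff image_iff order_refl subsetD)
  show ?thesis
  proof (cases "u \<le> v")
    case True
    have "continuous_on {u..v} g" using gc u v by (auto intro: continuous_on_subset)
    moreover have "g u \<le> g v" using u v cd by simp
    ultimately obtain u' v' where "u \<le> u'" "u' \<le> v'" "v' \<le> v" "g ` {u'..v'} = {g u..g v}"
      using interval_core[OF True] by blast
    then show ?thesis using u v by (intro exI[of _ u'] exI[of _ v']) auto
  next
    case False
    hence vu: "v \<le> u" by simp
    define g' where "g' t = - g t" for t
    have "continuous_on {v..u} g'" unfolding g'_def using gc u v by (auto intro!: continuous_intros intro: continuous_on_subset)
    moreover have "g' v \<le> g' u" using u v cd by (simp add: g'_def)
    ultimately obtain v' u' where vu': "v \<le> v'" "v' \<le> u'" "u' \<le> u" "g' ` {v'..u'} = {g' v..g' u}"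
      using interval_core[OF vu] by blast
    have "g ` {v'..u'} = uminus ` (g' ` {v'..u'})" by (auto simp: g'_def image_image)
    also have "\<dots> = uminus ` {- d..- c}" using vu'(4) u v by (simp add: g'_def)
    also have "\<dots> = {c..d}" by simp
    finally show ?thesis using vu' u v by (intro exI[of _ v'] exI[of _ u']) auto
  qed
qed

lemma funpow_cont:
  assumes "continuous_on I01 g" "g ` I01 \<subseteq> I01"
  shows "continuous_on I01 (g ^^ m) \<and> (g ^^ m) ` I01 \<subseteq> I01"
proof (induction m)
  case 0 then show ?case by (simp add: continuous_on_id)
next
  case (Suc m)
  have "continuous_on I01 (g \<circ> (g ^^ m))"
    using Suc assms by (intro continuous_on_compose) (auto intro: continuous_on_subset)
  moreover have "(g \<circ> (g ^^ m)) ` I01 \<subseteq> I01" using Suc assms by (auto simp: image_comp[symmetric])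
  ultimately show ?case by simp
qed

lemma chain_trace:
  fixes g :: "real \<Rightarrow> real" and a b :: "nat \<Rightarrow> real"
  assumes gc: "continuous_on I01 g" and gI: "g ` I01 \<subseteq> I01"
    and ab: "\<And>i. a i \<le> b i" and KI: "\<And>i. {a i..b i} \<subseteq> I01"
    and cov: "\<And>i. {a (Suc i)..b (Suc i)} \<subseteq> g ` {a i..b i}"
  shows "\<exists>z\<in>{a 0..b 0}. \<forall>i. (g ^^ i) z \<in> {a i..b i}"
proof -
  define K where "K i = {a i..b i}" for i
  have bk: "\<forall>y\<in>K m. \<exists>z\<in>K 0. (g ^^ m) z = y \<and> (\<forall>i\<le>m. (g ^^ i) z \<in> K i)" for m
  proof (induction m)
    case 0 then show ?case by auto
  next
    case (Suc m)
    show ?case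
    proof
      fix y assume "y \<in> K (Suc m)"
      then obtain y' where y': "y' \<in> K m" "g y' = y" using cov unfolding K_def by blast
      then obtain z where z: "z \<in> K 0" "(g ^^ m) z = y'" "\<forall>i\<le>m. (g ^^ i) z \<in> K i" using Suc by blast
      have "(g ^^ Suc m) z = y" using z y' by simp
      moreover have "\<forall>i\<le>Suc m. (g ^^ i) z \<in> K i"
        using z \<open>y \<in> K (Suc m)\<close> \<open>(g ^^ Suc m) z = y\<close> by (metis le_Suc_eq)
      ultimately show "\<exists>z\<in>K 0. (g ^^ Suc m) z = y \<and> (\<forall>i\<le>Suc m. (g ^^ i) z \<in> K i)" using z by blast
    qed
  qed
  define Z where "Z m = K 0 \<inter> (\<Inter>i\<in>{..m}. I01 \<inter> (g ^^ i) -` K i)" for m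
  have Zne: "Z m \<noteq> {}" for m
  proof -
    have "a m \<in> K m" using ab by (simp add: K_def)
    then obtain z where "z \<in> K 0" "\<forall>i\<le>m. (g ^^ i) z \<in> K i" using bk by blast
    moreover have "z \<in> I01" using \<open>z \<in> K 0\<close> KI[of 0] unfolding K_def by blast
    ultimately have "z \<in> Z m" by (auto simp: Z_def)
    then show ?thesis by auto
  qed
  have Zc: "compact (Z m)" for m
  proof -
    have "closed (I01 \<inter> (g ^^ i) -` K i)" for i
      using funpow_cont[OF gc gI, of i] by (intro continuous_closed_preimage) (auto simp: K_def I01_def)
    hence "closed (\<Inter>i\<in>{..m}. I01 \<inter> (g ^^ i) -` K i)" by (intro closed_INT) blast
    moreover have "compact (K 0)" by (simp add: K_def)
    ultimately show ?thesis unfolding Z_def by (intro compact_Int_closed) auto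
  qed
  have Zmono: "m \<le> m' \<Longrightarrow> Z m' \<subseteq> Z m" for m m' by (auto simp: Z_def)
  have "\<Inter>(range Z) \<noteq> {}" by (rule compact_nest[OF Zc Zne Zmono])
  then obtain z where z: "\<forall>m. z \<in> Z m" by auto
  have "z \<in> K 0" using z by (auto simp: Z_def)
  moreover have "(g ^^ i) z \<in> K i" for i using z[rule_format, of i] by (auto simp: Z_def)
  ultimately show ?thesis unfolding K_def by blast
qed

lemma chain_periodic:
  fixes g :: "real \<Rightarrow> real" and a b :: "nat \<Rightarrow> real"
  assumes gc: "continuous_on I01 g" and gI: "g ` I01 \<subseteq> I01"
    and ab: "\<And>i. a i \<le> b i" and KI: "\<And>i. {a i..b i} \<subseteq> I01"
    and cov: "\<And>i. i < M \<Longrightarrow> {a (Suc i)..b (Suc i)} \<subseteq> g ` {a i..b i}"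
    and M: "M \<ge> 1" and per: "a M = a 0" "b M = b 0"
  shows "\<exists>z\<in>{a 0..b 0}. (g ^^ M) z = z \<and> (\<forall>i\<le>M. (g ^^ i) z \<in> {a i..b i})"
proof -
  have ind: "m \<le> M \<Longrightarrow> \<exists>\<alpha> \<beta>. \<alpha> \<le> \<beta> \<and> {\<alpha>..\<beta>} \<subseteq> {a 0..b 0} \<and> (g ^^ m) ` {\<alpha>..\<beta>} = {a m..b m}
      \<and> (\<forall>i\<le>m. (g ^^ i) ` {\<alpha>..\<beta>} \<subseteq> {a i..b i})" for m
  proof (induction m)
    case 0
    then show ?case using ab[of 0] by (intro exI[of _ "a 0"] exI[of _ "b 0"]) auto
  next
    case (Suc m)
    then obtain \<alpha> \<beta> where ab1: "\<alpha> \<le> \<beta>" "{\<alpha>..\<beta>} \<subseteq> {a 0..b 0}" "(g ^^ m) ` {\<alpha>..\<beta>} = {a m..b m}"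
      "\<forall>i\<le>m. (g ^^ i) ` {\<alpha>..\<beta>} \<subseteq> {a i..b i}" by auto
    have "{\<alpha>..\<beta>} \<subseteq> I01" using ab1(2) KI[of 0] by blast
    hence "continuous_on {\<alpha>..\<beta>} (g ^^ Suc m)"
      using funpow_cont[OF gc gI, of "Suc m"] continuous_on_subset by blast
    moreover have "{a (Suc m)..b (Suc m)} \<subseteq> (g ^^ Suc m) ` {\<alpha>..\<beta>}"
    proof -
      have "(g ^^ Suc m) ` {\<alpha>..\<beta>} = g ` ((g ^^ m) ` {\<alpha>..\<beta>})" by (simp add: image_comp)
      then show ?thesis using ab1(3) cov[of m] Suc.prems by simp
    qed
    ultimately obtain \<alpha>' \<beta>' where ab2: "\<alpha> \<le> \<alpha>'" "\<alpha>' \<le> \<beta>'" "\<beta>' \<le> \<beta>" "(g ^^ Suc m) ` {\<alpha>'..\<beta>'} = {a (Suc m)..b (Suc m)}"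
      using interval_pre[of \<alpha> \<beta> "g ^^ Suc m" "a (Suc m)" "b (Suc m)"] ab[of "Suc m"] by blast
    have sub: "{\<alpha>'..\<beta>'} \<subseteq> {\<alpha>..\<beta>}" using ab2 by auto
    have "\<forall>i\<le>Suc m. (g ^^ i) ` {\<alpha>'..\<beta>'} \<subseteq> {a i..b i}"
    proof (intro allI impI)
      fix i assume "i \<le> Suc m"
      then show "(g ^^ i) ` {\<alpha>'..\<beta>'} \<subseteq> {a i..b i}"
      proof (cases "i = Suc m")
        case False
        hence "i \<le> m" using \<open>i \<le> Suc m\<close> by simp
        then show ?thesis using ab1(4) sub by (meson image_mono order_trans)
      qed (use ab2 in simp)
    qed
    then show ?case using ab2 ab1 sub by (intro exI[of _ \<alpha>'] exI[of _ \<beta>']) auto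
  qed
  obtain \<alpha> \<beta> where ab1: "\<alpha> \<le> \<beta>" "{\<alpha>..\<beta>} \<subseteq> {a 0..b 0}" "(g ^^ M) ` {\<alpha>..\<beta>} = {a 0..b 0}"
    "\<forall>i\<le>M. (g ^^ i) ` {\<alpha>..\<beta>} \<subseteq> {a i..b i}" using ind[of M] per by auto
  define G where "G = g ^^ M"
  have "{\<alpha>..\<beta>} \<subseteq> I01" using ab1(2) KI[of 0] by blast
  hence Gc: "continuous_on {\<alpha>..\<beta>} G"
    using funpow_cont[OF gc gI, of M] continuous_on_subset unfolding G_def by blast
  obtain p1 where p1: "p1 \<in> {\<alpha>..\<beta>}" "G p1 = a 0" using ab1(3) ab[of 0] unfolding G_def
    by (metis atLeastAtMost_iff image_iff order_refl)
  obtain p2 where p2: "p2 \<in> {\<alpha>..\<beta>}" "G p2 = b 0" using ab1(3) ab[of 0] unfolding G_def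
    by (metis atLeastAtMost_iff image_iff order_refl)
  have ab0: "a 0 \<le> \<alpha>" "\<beta> \<le> b 0" using ab1(1,2) by auto
  define \<phi> where "\<phi> t = G t - t" for t
  have \<phi>1: "\<phi> p1 \<le> 0" "0 \<le> \<phi> p2" using p1 p2 ab0 by (auto simp: \<phi>_def)
  have "\<exists>z\<in>{\<alpha>..\<beta>}. \<phi> z = 0"
  proof (cases "p1 \<le> p2")
    case True
    have "continuous_on {p1..p2} \<phi>" unfolding \<phi>_def using Gc p1 p2
      by (intro continuous_intros) (auto intro: continuous_on_subset)
    then obtain z where "p1 \<le> z" "z \<le> p2" "\<phi> z = 0" using IVT'[of \<phi> p1 0 p2] \<phi>1 True by auto
    then show ?thesis using p1 p2 by auto
  next
    case False
    have "continuous_on {p2..p1} \<phi>" unfolding \<phi>_def using Gc p1 p2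
      by (intro continuous_intros) (auto intro: continuous_on_subset)
    then obtain z where "p2 \<le> z" "z \<le> p1" "\<phi> z = 0" using IVT2'[of \<phi> p1 0 p2] \<phi>1 False by auto
    then show ?thesis using p1 p2 by auto
  qed
  then obtain z where z: "z \<in> {\<alpha>..\<beta>}" "G z = z" by (auto simp: \<phi>_def)
  have "\<forall>i\<le>M. (g ^^ i) z \<in> {a i..b i}"
  proof (intro allI impI)
    fix i assume "i \<le> M"
    hence "(g ^^ i) ` {\<alpha>..\<beta>} \<subseteq> {a i..b i}" using ab1(4) by blast
    then show "(g ^^ i) z \<in> {a i..b i}" using z(1) by blast
  qed
  moreover have "z \<in> {a 0..b 0}" using z(1) ab1(2) by blast
  ultimately show ?thesis using z(2) unfolding G_def by blast
qed


context cstr begin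

lemma cell_find:
  assumes "a \<le> b" "real a * h \<le> v" "v \<le> real (Suc b) * h"
  shows "\<exists>j. a \<le> j \<and> j \<le> b \<and> v \<in> J j"
  using assms
proof (induction b rule: dec_induct)
  case base
  then show ?case by (auto simp: J_def)
next
  case (step b)
  show ?case
  proof (cases "v \<le> real (Suc b) * h")
    case True
    then show ?thesis using step by force
  next
    case False
    then show ?thesis using step by (intro exI[of _ "Suc b"]) (auto simp: J_def)
  qed
qed

lemma F_close:
  assumes om: "\<And>x y. x \<in> I01 \<Longrightarrow> y \<in> I01 \<Longrightarrow> \<bar>x - y\<bar> \<le> h \<Longrightarrow> \<bar>f x - f y\<bar> \<le> \<omega>"
    and x: "x \<in> I01"
  shows "\<bar>F x - f x\<bar> \<le> 3 * h + \<omega>"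
proof -
  define k where "k = cidx x"
  have k: "k < n" by (simp add: k_def cidx_lt)
  have xJ: "x \<in> J k" using x_in_J[OF x] by (simp add: k_def)
  have r: "real (P k) * h \<le> F x" "F x \<le> real (Suc (Q k)) * h" using F_range[OF k xJ] by auto
  obtain j where j: "P k \<le> j" "j \<le> Q k" "F x \<in> J j" using cell_find[OF _ r] PQ[OF k] by auto
  have "B k j > 0" using B_interval[OF k j(1,2)] .
  then obtain j' where j': "j' < n" "A k j' > 0" "nd j' j" using B_pos by auto
  obtain y where y: "y \<in> H k" "f y \<in> H j'" using Awit[OF k j'(2)] by auto
  have yJ: "y \<in> J k" "f y \<in> J j'" using y H_sub_J by auto
  have "\<bar>F x - f y\<bar> \<le> 3 * h"
  proof -
    have "real j \<le> real j' + 2" "real j' \<le> real j + 2" using j'(3) by (auto simp: nd_def)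
    hence "real j * h \<le> (real j' + 2) * h" "real j' * h \<le> (real j + 2) * h"
      using h_pos by (auto intro: mult_right_mono)
    then show ?thesis using j(3) yJ(2) by (auto simp: J_def algebra_simps abs_le_iff)
  qed
  moreover have "\<bar>f x - f y\<bar> \<le> \<omega>"
  proof (rule om[OF x])
    show "y \<in> I01" using yJ J_I[OF k] by auto
    show "\<bar>x - y\<bar> \<le> h" using xJ yJ by (auto simp: J_def algebra_simps abs_le_iff)
  qed
  ultimately show ?thesis by linarith
qed

end


context cstr begin

lemma mh: "a \<le> b \<Longrightarrow> a * h \<le> b * h" using h_pos by (simp add: mult_right_mono)

lemma ck_real:
  assumes k: "k < n" and k': "k' = k \<or> k' = Suc k"
  shows "real (P k) * h + h \<le> real (cc k') * h \<and> real (cc k') * h + h \<le> real (Suc (Q k)) * h"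
proof -
  have a: "real (P k) + 1 \<le> real (cc k')" "real (cc k') + 1 \<le> real (Suc (Q k))"
    using key_c[OF k k'] by auto
  show ?thesis using mh[OF a(1)] mh[OF a(2)] by (simp add: algebra_simps)
qed

lemma W1:
  assumes k: "k < n" and j: "P k \<le> j" "j \<le> Q k"
    and zeta: "\<forall>s\<in>I01. \<forall>t\<in>I01. \<bar>s - t\<bar> < \<zeta> \<longrightarrow> \<bar>F s - F t\<bar> < h / 2"
    and eta: "0 < \<eta>" "\<eta> < \<zeta>" "\<eta> \<le> h / 4" and dl: "0 < \<delta>" "\<delta> < \<eta>"
    and gc: "continuous_on I01 g" and cl: "\<forall>x\<in>I01. \<bar>F x - g x\<bar> < \<delta>"
  shows "{real j * h + \<eta> .. real (Suc j) * h - \<eta>} \<subseteq> g ` {real k * h + \<eta> .. real (Suc k) * h - \<eta>}"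
proof -
  define K where "K = {real k * h + \<eta> .. real (Suc k) * h - \<eta>}"
  have g0: "real k * h \<in> I01" "real (Suc k) * h \<in> I01" using k grid_I[of k] grid_I[of "Suc k"] by auto
  have JI: "J k \<subseteq> I01" using J_I[OF k] .
  have KJ: "K \<subseteq> J k" using eta by (auto simp: K_def J_def)
  have Fg: "F (real k * h) = real (cc k) * h" "F (real (Suc k) * h) = real (cc (Suc k)) * h"
    using k F_grid[of k] F_grid[of "Suc k"] by auto
  have inK: "u \<in> K" if u: "u \<in> J k" "h \<le> \<bar>F u - F (real k * h)\<bar>" "h \<le> \<bar>F u - F (real (Suc k) * h)\<bar>" for u
  proof -
    have uI: "u \<in> I01" using u JI by auto
    have "\<not> u < real k * h + \<eta>"
    proof
      assume "u < real k * h + \<eta>"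
      hence "\<bar>u - real k * h\<bar> < \<zeta>" using u(1) eta by (auto simp: J_def)
      hence "\<bar>F u - F (real k * h)\<bar> < h / 2" using zeta uI g0 by blast
      then show False using u(2) h_pos by linarith
    qed
    moreover have "\<not> u > real (Suc k) * h - \<eta>"
    proof
      assume "u > real (Suc k) * h - \<eta>"
      hence "\<bar>u - real (Suc k) * h\<bar> < \<zeta>" using u(1) eta by (auto simp: J_def)
      hence "\<bar>F u - F (real (Suc k) * h)\<bar> < h / 2" using zeta uI g0 by blast
      then show False using u(3) h_pos by linarith
    qed
    ultimately show ?thesis by (auto simp: K_def)
  qed
  obtain u1 where u1: "u1 \<in> J k" "F u1 = real (P k) * h" using F_attain[OF k] by blast
  obtain u2 where u2: "u2 \<in> J k" "F u2 = real (Suc (Q k)) * h" using F_attain[OF k] by blast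
  have c1: "real (P k) * h + h \<le> real (cc k) * h \<and> real (cc k) * h + h \<le> real (Suc (Q k)) * h"
    using ck_real[OF k] by blast
  have c2: "real (P k) * h + h \<le> real (cc (Suc k)) * h \<and> real (cc (Suc k)) * h + h \<le> real (Suc (Q k)) * h"
    using ck_real[OF k] by blast
  have u1K: "u1 \<in> K" using inK[OF u1(1)] u1(2) Fg c1 c2 by auto
  have u2K: "u2 \<in> K" using inK[OF u2(1)] u2(2) Fg c1 c2 by auto
  have jh: "real (P k) * h \<le> real j * h" "real (Suc j) * h \<le> real (Suc (Q k)) * h"
    using j by (auto intro: mh)
  have gu1: "g u1 < real (P k) * h + \<delta>" using cl u1K KJ JI u1(2) by force
  have gu2: "g u2 > real (Suc (Q k)) * h - \<delta>" using cl u2K KJ JI u2(2) by force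
  show ?thesis
  proof
    fix y assume y: "y \<in> {real j * h + \<eta> .. real (Suc j) * h - \<eta>}"
    have y1: "g u1 \<le> y" using gu1 jh y dl by auto
    have y2: "y \<le> g u2" using gu2 jh y dl by auto
    show "y \<in> g ` {real k * h + \<eta> .. real (Suc k) * h - \<eta>}"
    proof (cases "u1 \<le> u2")
      case True
      have "{u1..u2} \<subseteq> K" using u1K u2K by (auto simp: K_def)
      hence "continuous_on {u1..u2} g" using KJ JI gc by (meson continuous_on_subset order_trans)
      then obtain s where "u1 \<le> s" "s \<le> u2" "g s = y" using IVT'[of g u1 y u2] y1 y2 True by auto
      then show ?thesis using \<open>{u1..u2} \<subseteq> K\<close> unfolding K_def by auto
    next
      case False
      have "{u2..u1} \<subseteq> K" using u1K u2K by (auto simp: K_def)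
      hence "continuous_on {u2..u1} g" using KJ JI gc by (meson continuous_on_subset order_trans)
      then obtain s where "u2 \<le> s" "s \<le> u1" "g s = y" using IVT2'[of g u1 y u2] y1 y2 False by auto
      then show ?thesis using \<open>{u2..u1} \<subseteq> K\<close> unfolding K_def by auto
    qed
  qed
qed

lemma W2:
  assumes k: "k < n" and x: "x \<in> I01" and t: "t \<in> J k" "\<bar>x - t\<bar> < 2 * \<delta>" and x': "\<bar>g x - x'\<bar> < \<delta>"
    and zeta: "\<forall>s\<in>I01. \<forall>t\<in>I01. \<bar>s - t\<bar> < \<zeta> \<longrightarrow> \<bar>F s - F t\<bar> < h / 2"
    and dl: "0 < \<delta>" "2 * \<delta> < \<zeta>" "\<delta> \<le> h / 8"
    and cl: "\<forall>x\<in>I01. \<bar>F x - g x\<bar> < \<delta>"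
  shows "\<exists>j. P k \<le> j \<and> j \<le> Q k \<and> (\<exists>t'\<in>J j. \<bar>x' - t'\<bar> < 2 * \<delta>)"
proof -
  have g0: "real k * h \<in> I01" "real (Suc k) * h \<in> I01" using k grid_I[of k] grid_I[of "Suc k"] by auto
  have Fg: "F (real k * h) = real (cc k) * h" "F (real (Suc k) * h) = real (cc (Suc k)) * h"
    using k F_grid[of k] F_grid[of "Suc k"] by auto
  have c1: "real (P k) * h + h \<le> real (cc k) * h \<and> real (cc k) * h + h \<le> real (Suc (Q k)) * h"
    using ck_real[OF k] by blast
  have c2: "real (P k) * h + h \<le> real (cc (Suc k)) * h \<and> real (cc (Suc k)) * h + h \<le> real (Suc (Q k)) * h"
    using ck_real[OF k] by blast
  have gx: "\<bar>x' - F x\<bar> < 2 * \<delta>" using cl x x' by force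
  have "\<exists>v. real (P k) * h \<le> v \<and> v \<le> real (Suc (Q k)) * h \<and> \<bar>x' - v\<bar> < 2 * \<delta>"
  proof (cases "x \<in> J k")
    case True
    then show ?thesis using F_range[OF k True] gx by blast
  next
    case False
    show ?thesis
    proof (cases "x < real k * h")
      case True
      hence "\<bar>x - real k * h\<bar> < 2 * \<delta>" using t by (auto simp: J_def)
      hence "\<bar>F x - F (real k * h)\<bar> < h / 2" using zeta x g0 dl by force
      hence "\<bar>x' - real (cc k) * h\<bar> < h" using gx Fg dl by linarith
      then show ?thesis using c1 by (intro exI[of _ x']) (auto simp: dl)
    next
      case F2: False
      hence "x > real (Suc k) * h" using False by (auto simp: J_def)
      hence "\<bar>x - real (Suc k) * h\<bar> < 2 * \<delta>" using t by (auto simp: J_def)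
      hence "\<bar>F x - F (real (Suc k) * h)\<bar> < h / 2" using zeta x g0 dl by force
      hence "\<bar>x' - real (cc (Suc k)) * h\<bar> < h" using gx Fg dl by linarith
      then show ?thesis using c2 by (intro exI[of _ x']) (auto simp: dl)
    qed
  qed
  then obtain v where v: "real (P k) * h \<le> v" "v \<le> real (Suc (Q k)) * h" "\<bar>x' - v\<bar> < 2 * \<delta>" by blast
  obtain j where "P k \<le> j" "j \<le> Q k" "v \<in> J j" using cell_find[OF _ v(1,2)] PQ[OF k] by auto
  then show ?thesis using v(3) by blast
qed

end


context cstr begin

lemma rho_bound:
  assumes "g \<in> C_lambda" "rho F g < \<delta>" "x \<in> I01"
  shows "\<bar>F x - g x\<bar> < \<delta>"
proof -
  have gI: "g x \<in> I01" using assms by (auto simp: C_lambda_def)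
  have bd: "bdd_above ((\<lambda>x. \<bar>F x - g x\<bar>) ` I01)"
  proof (rule bdd_aboveI2)
    fix y assume "y \<in> I01"
    then have "F y \<in> I01" "g y \<in> I01" using F_I assms(1) by (auto simp: C_lambda_def)
    then show "\<bar>F y - g y\<bar> \<le> 1" by (auto simp: I01_def)
  qed
  have "\<bar>F x - g x\<bar> \<le> rho F g" unfolding rho_def using assms(3) bd by (rule cSUP_upper)
  then show ?thesis using assms(2) by simp
qed

lemma shadow:
  assumes eps: "\<epsilon> > 0" and he: "h \<le> \<epsilon> / 2"
  shows "\<exists>\<delta>>0. \<delta> < \<epsilon> / 2 \<and> (\<forall>g\<in>C_lambda. rho F g < \<delta> \<longrightarrow>
            (\<forall>xs. pseudo_orbit g \<delta> xs \<longrightarrow>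
               (\<exists>z\<in>I01. traces g \<epsilon> z xs) \<and>
               (periodic_seq xs \<longrightarrow> (\<exists>z\<in>I01. traces g \<epsilon> z xs \<and> periodic_point g z))))"
proof -
  have "uniformly_continuous_on I01 F"
    by (rule compact_uniformly_continuous[OF F_cont]) (simp add: I01_def)
  moreover have "h / 2 > 0" using h_pos by simp
  ultimately obtain \<zeta> where z0: "\<zeta> > 0" and z1: "\<forall>s\<in>I01. \<forall>t\<in>I01. dist t s < \<zeta> \<longrightarrow> dist (F t) (F s) < h / 2"
    unfolding uniformly_continuous_on_def by blast
  have zeta: "\<forall>s\<in>I01. \<forall>t\<in>I01. \<bar>s - t\<bar> < \<zeta> \<longrightarrow> \<bar>F s - F t\<bar> < h / 2"
    using z1 by (simp add: dist_real_def)
  define \<eta> where "\<eta> = min (\<zeta> / 2) (h / 4)"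
  define \<delta> where "\<delta> = min (\<eta> / 2) (\<epsilon> / 4)"
  have eta: "0 < \<eta>" "\<eta> < \<zeta>" "\<eta> \<le> h / 4" using z0 h_pos by (auto simp: \<eta>_def)
  have dl: "0 < \<delta>" "\<delta> < \<eta>" "2 * \<delta> < \<zeta>" "\<delta> \<le> h / 8" "\<delta> \<le> \<epsilon> / 4"
    using eta eps by (auto simp: \<delta>_def)
  have main: "(\<exists>z\<in>I01. traces g \<epsilon> z xs) \<and>
               (periodic_seq xs \<longrightarrow> (\<exists>z\<in>I01. traces g \<epsilon> z xs \<and> periodic_point g z))"
    if g: "g \<in> C_lambda" and r: "rho F g < \<delta>" and po: "pseudo_orbit g \<delta> xs" for g xs
  proof -
    have gc: "continuous_on I01 g" and gI: "g ` I01 \<subseteq> I01" using g by (auto simp: C_lambda_def)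
    have cl: "\<forall>x\<in>I01. \<bar>F x - g x\<bar> < \<delta>" using rho_bound[OF g r] by blast
    have xsI: "\<And>i. xs i \<in> I01" and st: "\<And>i. \<bar>g (xs i) - xs (Suc i)\<bar> < \<delta>"
      using po by (auto simp: pseudo_orbit_def)
    define nk where "nk k x = (SOME j. P k \<le> j \<and> j \<le> Q k \<and> (\<exists>t\<in>J j. \<bar>x - t\<bar> < 2 * \<delta>))" for k x
    define ks where "ks = rec_nat (cidx (xs 0)) (\<lambda>i k. nk k (xs (Suc i)))"
    have ks0: "ks 0 = cidx (xs 0)" by (simp add: ks_def)
    have ksS: "ks (Suc i) = nk (ks i) (xs (Suc i))" for i by (simp add: ks_def)
    have nk_ok: "P k \<le> nk k x' \<and> nk k x' \<le> Q k \<and> (\<exists>t\<in>J (nk k x'). \<bar>x' - t\<bar> < 2 * \<delta>)"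
      if "k < n" "x \<in> I01" "t \<in> J k" "\<bar>x - t\<bar> < 2 * \<delta>" "\<bar>g x - x'\<bar> < \<delta>" for k x x' t
    proof -
      have "\<exists>j. P k \<le> j \<and> j \<le> Q k \<and> (\<exists>t'\<in>J j. \<bar>x' - t'\<bar> < 2 * \<delta>)"
        using W2[OF that(1-5) zeta dl(1,3,4) cl] .
      then show ?thesis unfolding nk_def by (rule someI_ex)
    qed
    have inv: "ks i < n \<and> (\<exists>t\<in>J (ks i). \<bar>xs i - t\<bar> < 2 * \<delta>)" for i
    proof (induction i)
      case 0
      have "\<bar>xs 0 - xs 0\<bar> < 2 * \<delta>" using dl(1) by simp
      then show ?case using x_in_J[OF xsI[of 0]] cidx_lt unfolding ks0 by blast
    next
      case (Suc i)
      then obtain t where t: "t \<in> J (ks i)" "\<bar>xs i - t\<bar> < 2 * \<delta>" by blast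
      have "P (ks i) \<le> ks (Suc i) \<and> ks (Suc i) \<le> Q (ks i) \<and> (\<exists>t\<in>J (ks (Suc i)). \<bar>xs (Suc i) - t\<bar> < 2 * \<delta>)"
        unfolding ksS using nk_ok[OF _ xsI t st] Suc by blast
      moreover have "Q (ks i) < n" using PQ Suc by blast
      ultimately show ?case by auto
    qed
    have nkP: "P (ks i) \<le> ks (Suc i) \<and> ks (Suc i) \<le> Q (ks i)" for i
    proof -
      obtain t where t: "t \<in> J (ks i)" "\<bar>xs i - t\<bar> < 2 * \<delta>" using inv[of i] by blast
      show ?thesis unfolding ksS using nk_ok[OF _ xsI t st] inv[of i] by blast
    qed
    define a where "a i = real (ks i) * h + \<eta>" for i
    define b where "b i = real (Suc (ks i)) * h - \<eta>" for i
    have ab: "a i \<le> b i" for i using eta h_pos by (auto simp: a_def b_def algebra_simps)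
    have KJ: "{a i..b i} \<subseteq> J (ks i)" for i using eta by (auto simp: a_def b_def J_def)
    have KI: "{a i..b i} \<subseteq> I01" for i using KJ[of i] J_I inv[of i] by blast
    have cov: "{a (Suc i)..b (Suc i)} \<subseteq> g ` {a i..b i}" for i
      unfolding a_def b_def using W1[OF _ _ _ zeta eta dl(1,2) gc cl] inv[of i] nkP[of i] by blast
    have est: "\<bar>w - xs i\<bar> < \<epsilon>" if "w \<in> {a i..b i}" for w i
    proof -
      obtain t where t: "t \<in> J (ks i)" "\<bar>xs i - t\<bar> < 2 * \<delta>" using inv[of i] by blast
      have "w \<in> J (ks i)" using that KJ by blast
      hence "\<bar>w - t\<bar> \<le> h" using t(1) by (auto simp: J_def algebra_simps abs_le_iff)
      then show ?thesis using t(2) he dl(5) by linarith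
    qed
    have gpI: "(g ^^ m) ` I01 \<subseteq> I01" for m using funpow_cont[OF gc gI] by blast
    have part1: "\<exists>z\<in>I01. traces g \<epsilon> z xs"
    proof -
      obtain z where z: "z \<in> {a 0..b 0}" "\<forall>i. (g ^^ i) z \<in> {a i..b i}"
        using chain_trace[of g a b, OF gc gI ab KI cov] by blast
      have "z \<in> I01" using z(1) KI by blast
      moreover have "traces g \<epsilon> z xs" unfolding traces_def using z(2) est by blast
      ultimately show ?thesis by blast
    qed
    have part2: "\<exists>z\<in>I01. traces g \<epsilon> z xs \<and> periodic_point g z" if ps: "periodic_seq xs"
    proof -
      obtain N where N: "N \<ge> 1" "\<forall>i. xs (i + N) = xs i" using ps by (auto simp: periodic_seq_def)
      have xsper: "xs (i + q * N) = xs i" for q i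
      proof (induction q)
        case (Suc q)
        have "xs (i + Suc q * N) = xs ((i + q * N) + N)" by (simp add: algebra_simps)
        also have "\<dots> = xs (i + q * N)" using N(2) by blast
        finally show ?case using Suc by simp
      qed simp
      have kscong: "ks (p + j) = ks (q + j)" if "ks p = ks q" "\<forall>j. xs (p + j) = xs (q + j)" for p q j
      proof (induction j)
        case 0 then show ?case using that by simp
      next
        case (Suc j)
        have "ks (p + Suc j) = nk (ks (p + j)) (xs (Suc (p + j)))" using ksS by simp
        also have "\<dots> = nk (ks (q + j)) (xs (Suc (q + j)))" using Suc that(2)[rule_format, of "Suc j"] by simp
        also have "\<dots> = ks (q + Suc j)" using ksS by simp
        finally show ?case .
      qed
      define fm where "fm m = ks (m * N)" for m
      have "fm ` {..n} \<subseteq> {..<n}" using inv by (auto simp: fm_def)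
      hence "card (fm ` {..n}) \<le> card {..<n}" by (intro card_mono) auto
      hence "card (fm ` {..n}) < card {..n}" by simp
      hence "\<not> inj_on fm {..n}" using pigeonhole by blast
      then obtain m1 m2 where m: "m1 < m2" "fm m1 = fm m2"
        unfolding inj_on_def by (metis linorder_neqE_nat)
      define i0 where "i0 = m1 * N"
      define M where "M = (m2 - m1) * N"
      have M1: "M \<ge> 1" using m(1) N(1) by (simp add: M_def)
      have i0M: "i0 + M = m2 * N" using m(1) by (simp add: i0_def M_def algebra_simps diff_mult_distrib)
      have ksper: "ks (i0 + M + j) = ks (i0 + j)" for j
      proof -
        have "ks (i0 + j) = ks (m2 * N + j)"
        proof (rule kscong)
          show "ks i0 = ks (m2 * N)" using m(2) by (simp add: fm_def i0_def)
          show "\<forall>j. xs (i0 + j) = xs (m2 * N + j)"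
            using xsper by (metis add.commute i0_def)
        qed
        then show ?thesis using i0M by simp
      qed
      define a' where "a' i = a (i0 + i)" for i
      define b' where "b' i = b (i0 + i)" for i
      have per: "a' M = a' 0" "b' M = b' 0" using ksper[of 0] by (simp_all add: a'_def b'_def a_def b_def)
      obtain z' where z': "z' \<in> {a' 0..b' 0}" "(g ^^ M) z' = z'" "\<forall>i\<le>M. (g ^^ i) z' \<in> {a' i..b' i}"
        using chain_periodic[OF gc gI, of a' b' M] ab KI cov M1 per
        unfolding a'_def b'_def by (metis add_Suc_right)
      have ext: "(g ^^ i) z' \<in> {a (i0 + i)..b (i0 + i)}" for i
      proof (induction i rule: less_induct)
        case (less i)
        show ?case
        proof (cases "i \<le> M")
          case True then show ?thesis using z'(3) by (auto simp: a'_def b'_def)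
        next
          case False
          then obtain i' where i': "i = i' + M" by (metis add.commute le_add_diff_inverse nat_le_linear)
          have "i' < i" using i' M1 by simp
          have "(g ^^ i) z' = (g ^^ i') ((g ^^ M) z')" by (simp add: i' funpow_add)
          also have "\<dots> = (g ^^ i') z'" using z'(2) by simp
          finally have "(g ^^ i) z' = (g ^^ i') z'" .
          moreover have "a (i0 + i) = a (i0 + i')" "b (i0 + i) = b (i0 + i')"
            using ksper[of i'] i' by (simp_all add: a_def b_def algebra_simps)
          ultimately show ?thesis using less[OF \<open>i' < i\<close>] by simp
        qed
      qed
      define r where "r = (M - 1) * i0"
      have ir: "i0 + r = (M * m1) * N" using M1 by (simp add: r_def i0_def algebra_simps diff_mult_distrib)
      define z where "z = (g ^^ r) z'"
      have z'I: "z' \<in> I01" using z'(1) KI unfolding a'_def b'_def by blast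
      have zI: "z \<in> I01" using gpI z'I by (auto simp: z_def)
      have "traces g \<epsilon> z xs"
        unfolding traces_def
      proof
        fix i
        have "(g ^^ i) z = (g ^^ (i + r)) z'" by (simp add: z_def funpow_add)
        hence "(g ^^ i) z \<in> {a (i0 + r + i)..b (i0 + r + i)}" using ext[of "i + r"] by (simp add: algebra_simps)
        hence "\<bar>(g ^^ i) z - xs (i0 + r + i)\<bar> < \<epsilon>" by (rule est)
        moreover have "xs (i0 + r + i) = xs i" using xsper[of i "M * m1"] ir by (simp add: algebra_simps)
        ultimately show "\<bar>(g ^^ i) z - xs i\<bar> < \<epsilon>" by simp
      qed
      moreover have "periodic_point g z"
        unfolding periodic_point_def
      proof (intro exI[of _ M] conjI)
        show "1 \<le> M" using M1 .
        have "(g ^^ M) z = (g ^^ (M + r)) z'" by (simp add: z_def funpow_add)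
        also have "\<dots> = (g ^^ (r + M)) z'" by (simp only: add.commute)
        also have "\<dots> = (g ^^ r) ((g ^^ M) z')" by (simp add: funpow_add)
        also have "\<dots> = z" using z'(2) by (simp add: z_def)
        finally show "(g ^^ M) z = z" .
      qed
      ultimately show ?thesis using zI by blast
    qed
    show ?thesis using part1 part2 by blast
  qed
  show ?thesis
    using dl eps main by (intro exI[of _ \<delta>]) auto
qed

end


theorem mainTheorem8:
  fixes \<epsilon> :: real and f :: "real \<Rightarrow> real"
  assumes "\<epsilon> > 0" and "f \<in> C_lambda"
  shows "\<exists>\<delta> F. 0 < \<delta> \<and> \<delta> < \<epsilon> / 2 \<and> F \<in> C_lambda \<and>
           piecewise_affine F \<and> rho f F < \<epsilon> / 2 \<and>
           (\<forall>g \<in> C_lambda. rho F g < \<delta> \<longrightarrow>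
              (\<forall>xs. pseudo_orbit g \<delta> xs \<longrightarrow>
                 (\<exists>z \<in> I01. traces g \<epsilon> z xs) \<and>
                 (periodic_seq xs \<longrightarrow> (\<exists>z \<in> I01. traces g \<epsilon> z xs \<and> periodic_point g z))))"
proof -
  have eps: "\<epsilon> > 0" and fC: "f \<in> C_lambda" using assms by auto
  have "uniformly_continuous_on I01 f"
    using fC by (intro compact_uniformly_continuous) (auto simp: C_lambda_def I01_def)
  moreover have "\<epsilon> / 8 > 0" using eps by simp
  ultimately obtain \<zeta> where z0: "\<zeta> > 0" and z1: "\<forall>x\<in>I01. \<forall>y\<in>I01. dist y x < \<zeta> \<longrightarrow> dist (f y) (f x) < \<epsilon> / 8"
    unfolding uniformly_continuous_on_def by blast
  obtain n :: nat where n: "max (1 / \<zeta>) (16 / \<epsilon>) + 2 < real n" using reals_Archimedean2 by blast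
  have "0 < 16 / \<epsilon>" using eps by simp
  moreover have "16 / \<epsilon> \<le> max (1 / \<zeta>) (16 / \<epsilon>)" by (rule max.cobounded2)
  ultimately have "2 < real n" using n by linarith
  hence n2: "n \<ge> 2" by simp
  interpret C: cstr f n using fC n2 by unfold_locales
  have hz: "C.h < \<zeta>"
  proof -
    have "1 / \<zeta> < real n" using n by linarith
    hence "1 < real n * \<zeta>" using z0 by (simp add: field_simps)
    then show ?thesis using n2 z0 by (simp add: C.h_def field_simps)
  qed
  have he: "C.h \<le> \<epsilon> / 16"
  proof -
    have "16 / \<epsilon> < real n" using n by linarith
    hence "16 < real n * \<epsilon>" using eps by (simp add: field_simps)
    then show ?thesis using n2 eps by (simp add: C.h_def field_simps)
  qed
  have om: "\<bar>f x - f y\<bar> \<le> \<epsilon> / 8" if "x \<in> I01" "y \<in> I01" "\<bar>x - y\<bar> \<le> C.h" for x y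
  proof -
    have "dist x y < \<zeta>" using that hz by (simp add: dist_real_def)
    hence "dist (f x) (f y) < \<epsilon> / 8" using z1 that by blast
    then show ?thesis by (simp add: dist_real_def)
  qed
  have close: "\<bar>f x - C.F x\<bar> \<le> 5 * \<epsilon> / 16" if "x \<in> I01" for x
    using C.F_close[OF om that] he by (simp add: abs_minus_commute)
  have "rho f C.F \<le> 5 * \<epsilon> / 16"
    unfolding rho_def by (rule cSUP_least) (use close in \<open>auto simp: I01_def\<close>)
  hence rho: "rho f C.F < \<epsilon> / 2" using eps by simp
  obtain \<delta> where d: "\<delta> > 0" "\<delta> < \<epsilon> / 2" "\<forall>g\<in>C_lambda. rho C.F g < \<delta> \<longrightarrow>
            (\<forall>xs. pseudo_orbit g \<delta> xs \<longrightarrow>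
               (\<exists>z\<in>I01. traces g \<epsilon> z xs) \<and>
               (periodic_seq xs \<longrightarrow> (\<exists>z\<in>I01. traces g \<epsilon> z xs \<and> periodic_point g z)))"
  proof -
    have "C.h \<le> \<epsilon> / 2" using he eps by simp
    then show ?thesis using C.shadow[OF eps] that by blast
  qed
  show ?thesis
    using d rho C.F_C C.F_pa by blast
qed


end
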